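(* Fix $\vartheta>0$ and let $D_n^{(\vartheta)}$ be the depth of the $n$-th inserted node in a Hoppe tree with parameter $\vartheta$. Then, as $n\to\infty$, \begin{align*} \mathbb{E}[D_n^{(\vartheta)}] &= 1 + \sum_{i=1}^{n-2} \frac{1}{\vartheta+i} = \log n -\Psi(\vartheta+1) +1 + o(1),\\ \mathrm{Var}(D_n^{(\vartheta)}) &= \sum_{i=1}^{n-2}\frac{1}{\vartheta+i} - \sum_{i=1}^{n-2} \left( \frac{1}{\vartheta+i} \right)^2 = \log n -\Psi(\vartheta+1)-\Psi_1(\vartheta+1) + o(1),\\ \frac{D_n^{(\vartheta)}-\mathbb{E}[D_n^{(\vartheta)}]}{ \sqrt{\mathrm{Var}(D_n^{(\vartheta)})}} &\stackrel{d}{\longrightarrow} \mathcal{N}(0,1),\\ d_{\mathrm{TV}} \left(\mathcal{L}(D_n^{(\vartheta)}), \Pi\left(\mathbb{E}[D_n^{(\vartheta)}]\right) \right) &= \mathcal{O}\left(\frac{1}{\log n}\right). \end{align*}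
   Context: Hoppe tree with parameter $\vartheta>0$: the tree is grown by successive insertion of nodes, labelled $1,2,3,\ldots$ in order of insertion. Initially there is only the root (node $1$). In each step a parent node is chosen among the existing nodes, independently of the past, with probability proportional to its weight, where the root has weight $\vartheta$ and every other node has weight $1$; a new node is attached as a child of the chosen node. The depth of a node is its distance to the root. $\Psi=\frac{d}{dx}\log\Gamma$ is the digamma function and $\Psi_1=\frac{d^2}{dx^2}\log\Gamma$ the trigamma function. $\Pi(\lambda)$ denotes the Poisson distribution with parameter $\lambda$, $d_{\mathrm{TV}}$ the total variation distance, $\mathcal{L}(X)$ the law of $X$, and $\mathcal{N}(0,1)$ the standard normal distribution. *)

theory Defs
  imports "HOL-Probability.Probability" "HOL-Library.Landau_Symbols"
begin

text \<open>Hoppe tree. Nodes are labelled 1,2,3,...; node 1 is the root.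
  A tree on nodes 1..n is encoded by its parent map p (p j = parent of node j, for 2 \<le> j \<le> n).\<close>

definition parent_pmf :: "real \<Rightarrow> nat \<Rightarrow> nat pmf" where
  "parent_pmf \<theta> k = embed_pmf (\<lambda>j. if j = 1 then \<theta> / (\<theta> + real k - 1)
      else if 2 \<le> j \<and> j \<le> k then 1 / (\<theta> + real k - 1) else 0)"

fun hoppe_tree :: "real \<Rightarrow> nat \<Rightarrow> (nat \<Rightarrow> nat) pmf" where
  "hoppe_tree \<theta> 0 = return_pmf (\<lambda>_. 0)"
| "hoppe_tree \<theta> (Suc 0) = return_pmf (\<lambda>_. 0)"
| "hoppe_tree \<theta> (Suc (Suc k)) =
     hoppe_tree \<theta> (Suc k) \<bind> (\<lambda>p. parent_pmf \<theta> (Suc k) \<bind> (\<lambda>j. return_pmf (p(Suc (Suc k) := j))))"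

fun depth_fuel :: "(nat \<Rightarrow> nat) \<Rightarrow> nat \<Rightarrow> nat \<Rightarrow> nat" where
  "depth_fuel p 0 j = 0"
| "depth_fuel p (Suc f) j = (if j \<le> 1 then 0 else Suc (depth_fuel p f (p j)))"

definition depth :: "(nat \<Rightarrow> nat) \<Rightarrow> nat \<Rightarrow> nat" where
  "depth p j = depth_fuel p j j"

definition depth_law :: "real \<Rightarrow> nat \<Rightarrow> nat pmf" where
  "depth_law \<theta> n = map_pmf (\<lambda>p. depth p n) (hoppe_tree \<theta> n)"

definition dTV :: "nat pmf \<Rightarrow> nat pmf \<Rightarrow> real" where
  "dTV P Q = (SUP A. \<bar>measure_pmf.prob P A - measure_pmf.prob Q A\<bar>)"

end

theory Submission
  imports Defs "HOL-Real_Asymp.Real_Asymp"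
begin


lemma parent_pmf_val:
  assumes "\<theta> > 0" "k \<ge> 1"
  shows "pmf (parent_pmf \<theta> k) j = (if j = 1 then \<theta> / (\<theta> + real k - 1)
      else if 2 \<le> j \<and> j \<le> k then 1 / (\<theta> + real k - 1) else 0)"
  unfolding parent_pmf_def
proof (rule pmf_embed_pmf)
  have pos: "\<theta> + real k - 1 > 0" using assms by simp
  show "0 \<le> (if j = 1 then \<theta> / (\<theta> + real k - 1) else if 2 \<le> j \<and> j \<le> k then 1 / (\<theta> + real k - 1) else 0)" for j
    using pos assms by auto
  have "(\<integral>\<^sup>+ x. ennreal (if x = 1 then \<theta> / (\<theta> + real k - 1) else if 2 \<le> x \<and> x \<le> k then 1 / (\<theta> + real k - 1) else 0) \<partial>count_space UNIV)
     = (\<Sum>x\<in>{1..k}. ennreal (if x = 1 then \<theta> / (\<theta> + real k - 1) else if 2 \<le> x \<and> x \<le> k then 1 / (\<theta> + real k - 1) else 0))"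
    by (rule nn_integral_count_space') (use assms in auto)
  also have "\<dots> = ennreal (\<Sum>x\<in>{1..k}. (if x = 1 then \<theta> / (\<theta> + real k - 1) else if 2 \<le> x \<and> x \<le> k then 1 / (\<theta> + real k - 1) else 0))"
    using pos assms by (subst sum_ennreal) auto
  also have "(\<Sum>x\<in>{1..k}. (if x = 1 then \<theta> / (\<theta> + real k - 1) else if 2 \<le> x \<and> x \<le> k then 1 / (\<theta> + real k - 1) else 0))
      = \<theta> / (\<theta> + real k - 1) + (\<Sum>x\<in>{2..k}. 1 / (\<theta> + real k - 1))"
  proof -
    have "{1..k} = insert 1 {2..k}" using assms by auto
    then show ?thesis by (simp add: sum.insert)
  qed
  also have "\<dots> = (\<theta> + (real k - 1)) / (\<theta> + real k - 1)"
    using assms by (simp add: of_nat_diff add_divide_distrib)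
  also have "\<dots> = 1" using pos by (simp add: algebra_simps)
  finally show "(\<integral>\<^sup>+ x. ennreal (if x = 1 then \<theta> / (\<theta> + real k - 1) else if 2 \<le> x \<and> x \<le> k then 1 / (\<theta> + real k - 1) else 0) \<partial>count_space UNIV) = 1"
    by simp
qed

lemma set_parent_pmf:
  assumes "\<theta> > 0" "k \<ge> 1"
  shows "set_pmf (parent_pmf \<theta> k) \<subseteq> {1..k}"
  using parent_pmf_val[OF assms] assms by (auto simp: set_pmf_iff split: if_splits)

definition wft :: "nat \<Rightarrow> (nat \<Rightarrow> nat) \<Rightarrow> bool" where
  "wft n p \<longleftrightarrow> (\<forall>i. 2 \<le> i \<and> i \<le> n \<longrightarrow> 1 \<le> p i \<and> p i < i)"

lemma wft_hoppe:
  "\<theta> > 0 \<Longrightarrow> p \<in> set_pmf (hoppe_tree \<theta> n) \<Longrightarrow> wft n p"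
proof (induction \<theta> n arbitrary: p rule: hoppe_tree.induct)
  case (1 \<theta>) then show ?case by (auto simp: wft_def)
next
  case (2 \<theta>) then show ?case by (auto simp: wft_def)
next
  case (3 \<theta> k)
  from 3(3) obtain p0 x where p0: "p0 \<in> set_pmf (hoppe_tree \<theta> (Suc k))"
    and x: "x \<in> set_pmf (parent_pmf \<theta> (Suc k))" and p: "p = p0(Suc (Suc k) := x)"
    by auto
  have "wft (Suc k) p0" using 3(1,2) p0 by blast
  moreover have "x \<in> {1..Suc k}" using set_parent_pmf[of \<theta> "Suc k"] 3(2) x by auto
  ultimately show ?case unfolding p wft_def by (auto simp: le_Suc_eq)
qed

lemma depth_fuel_indep:
  assumes "wft n p" "j \<le> n"
  shows "j \<le> f \<Longrightarrow> j \<le> g \<Longrightarrow> depth_fuel p f j = depth_fuel p g j"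
  using assms(2)
proof (induction j arbitrary: f g rule: less_induct)
  case (less j)
  show ?case
  proof (cases "j \<le> 1")
    case True
    then show ?thesis by (cases f; cases g) auto
  next
    case False
    then obtain f' g' where f: "f = Suc f'" and g: "g = Suc g'"
      using less.prems by (cases f; cases g) auto
    have pj: "p j < j" using assms(1) False less.prems unfolding wft_def by auto
    have "depth_fuel p f' (p j) = depth_fuel p g' (p j)"
      using less.IH[of "p j" f' g'] pj less.prems f g by auto
    then show ?thesis using False f g by simp
  qed
qed

lemma depth_step:
  assumes "wft n p" "2 \<le> j" "j \<le> n"
  shows "depth p j = Suc (depth p (p j))"
proof -
  obtain j' where j: "j = Suc j'" using assms by (cases j) auto
  have pj: "p j < j" using assms unfolding wft_def by auto
  have "depth p j = Suc (depth_fuel p j' (p j))" using assms j by (simp add: depth_def)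
  also have "depth_fuel p j' (p j) = depth_fuel p (p j) (p j)"
    by (rule depth_fuel_indep[OF assms(1)]) (use pj j assms in auto)
  finally show ?thesis by (simp add: depth_def)
qed

lemma depth_small: "j \<le> 1 \<Longrightarrow> depth p j = 0"
  by (cases j) (auto simp: depth_def)

lemma depth_upd:
  assumes "wft n p" "n < m" "j \<le> n"
  shows "depth (p(m := x)) j = depth p j"
  using assms(3)
proof (induction j rule: less_induct)
  case (less j)
  show ?case
  proof (cases "j \<le> 1")
    case True then show ?thesis by (simp add: depth_small)
  next
    case False
    have w': "wft n (p(m := x))" using assms unfolding wft_def by auto
    have pj: "p j < j" using assms(1) False less.prems unfolding wft_def by auto
    have "depth (p(m := x)) j = Suc (depth (p(m := x)) ((p(m := x)) j))"
      by (rule depth_step[OF w']) (use False less.prems in auto)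
    also have "(p(m := x)) j = p j" using less.prems assms by auto
    also have "depth (p(m := x)) (p j) = depth p (p j)" using less.IH[of "p j"] pj less.prems by (simp add: fun_upd_def)
    also have "Suc (depth p (p j)) = depth p j"
      by (rule depth_step[OF assms(1), symmetric]) (use False less.prems in auto)
    finally show ?thesis .
  qed
qed

lemma depth_new:
  assumes "wft (Suc k) p" "1 \<le> x" "x \<le> Suc k"
  shows "depth (p(Suc (Suc k) := x)) (Suc (Suc k)) = (if x = 1 then 1 else Suc (depth p x))"
proof -
  let ?p = "p(Suc (Suc k) := x)"
  have w: "wft (Suc (Suc k)) ?p" using assms unfolding wft_def by (auto simp: le_Suc_eq)
  have "depth ?p (Suc (Suc k)) = Suc (depth ?p x)"
    using depth_step[OF w, of "Suc (Suc k)"] by simp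
  also have "depth ?p x = (if x = 1 then 0 else depth p x)"
    using depth_upd[OF assms(1), of "Suc (Suc k)" x x] assms by (auto simp: depth_small)
  finally show ?thesis by (simp add: fun_upd_def)
qed

lemma map_depth_hoppe:
  assumes "\<theta> > 0"
  shows "j \<le> n \<Longrightarrow> map_pmf (\<lambda>p. depth p j) (hoppe_tree \<theta> n) = depth_law \<theta> j"
proof (induction n rule: dec_induct)
  case base then show ?case by (simp add: depth_law_def)
next
  case (step n)
  show ?case
  proof (cases n)
    case 0
    then show ?thesis using step by (simp add: depth_law_def)
  next
    case (Suc k)
    have "map_pmf (\<lambda>p. depth p j) (hoppe_tree \<theta> (Suc n)) =
      hoppe_tree \<theta> (Suc k) \<bind> (\<lambda>p. parent_pmf \<theta> (Suc k) \<bind> (\<lambda>x. return_pmf (depth (p(Suc (Suc k) := x)) j)))"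
      by (simp add: Suc map_bind_pmf map_return_pmf)
    also have "\<dots> = hoppe_tree \<theta> (Suc k) \<bind> (\<lambda>p. return_pmf (depth p j))"
    proof (rule bind_pmf_cong[OF refl])
      fix p assume "p \<in> set_pmf (hoppe_tree \<theta> (Suc k))"
      then have w: "wft (Suc k) p" by (rule wft_hoppe[OF assms(1)])
      have "parent_pmf \<theta> (Suc k) \<bind> (\<lambda>x. return_pmf (depth (p(Suc (Suc k) := x)) j))
          = parent_pmf \<theta> (Suc k) \<bind> (\<lambda>x. return_pmf (depth p j))"
        using depth_upd[OF w, of "Suc (Suc k)" j] step Suc by simp
      then show "parent_pmf \<theta> (Suc k) \<bind> (\<lambda>x. return_pmf (depth (p(Suc (Suc k) := x)) j)) = return_pmf (depth p j)"
        by (simp add: bind_pmf_const)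
    qed
    also have "\<dots> = map_pmf (\<lambda>p. depth p j) (hoppe_tree \<theta> n)"
      by (simp add: Suc map_pmf_def)
    finally show ?thesis using step by simp
  qed
qed

lemma depth_law_rec:
  assumes "\<theta> > 0"
  shows "depth_law \<theta> (Suc (Suc k)) = parent_pmf \<theta> (Suc k) \<bind>
     (\<lambda>x. if x = 1 then return_pmf 1 else map_pmf Suc (depth_law \<theta> x))"
proof -
  have "depth_law \<theta> (Suc (Suc k)) =
      hoppe_tree \<theta> (Suc k) \<bind> (\<lambda>p. parent_pmf \<theta> (Suc k) \<bind> (\<lambda>x. return_pmf (depth (p(Suc (Suc k) := x)) (Suc (Suc k)))))"
    by (simp add: depth_law_def map_bind_pmf map_return_pmf)
  also have "\<dots> = hoppe_tree \<theta> (Suc k) \<bind> (\<lambda>p. parent_pmf \<theta> (Suc k) \<bind> (\<lambda>x. return_pmf (if x = 1 then 1 else Suc (depth p x))))"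
  proof (rule bind_pmf_cong[OF refl], rule bind_pmf_cong[OF refl])
    fix p x assume p: "p \<in> set_pmf (hoppe_tree \<theta> (Suc k))" and x: "x \<in> set_pmf (parent_pmf \<theta> (Suc k))"
    have "x \<in> {1..Suc k}" using set_parent_pmf[of \<theta> "Suc k"] assms x by auto
    then show "return_pmf (depth (p(Suc (Suc k) := x)) (Suc (Suc k))) = return_pmf (if x = 1 then 1 else Suc (depth p x))"
      using depth_new[OF wft_hoppe[OF assms p]] by auto
  qed
  also have "\<dots> = parent_pmf \<theta> (Suc k) \<bind> (\<lambda>x. hoppe_tree \<theta> (Suc k) \<bind> (\<lambda>p. return_pmf (if x = 1 then 1 else Suc (depth p x))))"
    by (rule bind_commute_pmf)
  also have "\<dots> = parent_pmf \<theta> (Suc k) \<bind> (\<lambda>x. if x = 1 then return_pmf 1 else map_pmf Suc (depth_law \<theta> x))"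
  proof (rule bind_pmf_cong[OF refl])
    fix x assume x: "x \<in> set_pmf (parent_pmf \<theta> (Suc k))"
    have xr: "x \<in> {1..Suc k}" using set_parent_pmf[of \<theta> "Suc k"] assms x by auto
    show "hoppe_tree \<theta> (Suc k) \<bind> (\<lambda>p. return_pmf (if x = 1 then 1 else Suc (depth p x))) =
         (if x = 1 then return_pmf 1 else map_pmf Suc (depth_law \<theta> x))"
    proof (cases "x = 1")
      case True then show ?thesis by (simp add: bind_pmf_const)
    next
      case False
      have "hoppe_tree \<theta> (Suc k) \<bind> (\<lambda>p. return_pmf (Suc (depth p x))) =
          map_pmf Suc (map_pmf (\<lambda>p. depth p x) (hoppe_tree \<theta> (Suc k)))"
        by (simp add: map_pmf_def bind_assoc_pmf bind_return_pmf)
      also have "\<dots> = map_pmf Suc (depth_law \<theta> x)" using map_depth_hoppe[OF assms, of x "Suc k"] xr by simp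
      finally show ?thesis using False by simp
    qed
  qed
  finally show ?thesis .
qed


definition sh :: "(nat \<Rightarrow> real) \<Rightarrow> nat \<Rightarrow> real" where
  "sh f d = (if d = 0 then 0 else f (d - 1))"

lemma sh_Suc[simp]: "sh f (Suc d) = f d" and sh_0[simp]: "sh f 0 = 0"
  by (simp_all add: sh_def)

lemma pmf_map_Suc: "pmf (map_pmf Suc M) d = sh (pmf M) d"
proof (cases d)
  case 0
  have "Suc -` {0} = {}" by auto
  then show ?thesis using 0 by (simp add: pmf_map)
next
  case (Suc d')
  then show ?thesis by (simp add: pmf_map_inj')
qed

definition q :: "real \<Rightarrow> nat \<Rightarrow> nat \<Rightarrow> real" where
  "q \<theta> k d = pmf (depth_law \<theta> (Suc (Suc k))) d"

lemma pmf_dl: "pmf (depth_law \<theta> (Suc (Suc i))) = q \<theta> i"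
  by (rule ext) (simp add: q_def)

lemma q_R:
  assumes "\<theta> > 0"
  shows "(\<theta> + real k) * q \<theta> k d = \<theta> * (if d = 1 then 1 else 0) + (\<Sum>i<k. sh (q \<theta> i) d)"
proof -
  let ?F = "\<lambda>x. if x = 1 then return_pmf 1 else map_pmf Suc (depth_law \<theta> x)"
  have "q \<theta> k d = (\<integral>x. pmf (?F x) d \<partial>measure_pmf (parent_pmf \<theta> (Suc k)))"
    unfolding q_def depth_law_rec[OF assms] pmf_bind ..
  also have "\<dots> = (\<Sum>x\<in>{1..Suc k}. pmf (?F x) d * pmf (parent_pmf \<theta> (Suc k)) x)"
    by (rule integral_measure_pmf_real) (use set_parent_pmf[of \<theta> "Suc k"] assms in auto)
  also have "{1..Suc k} = insert 1 ((\<lambda>i. Suc (Suc i)) ` {..<k})"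
  proof (intro equalityI subsetI)
    fix x assume "x \<in> {1..Suc k}"
    then show "x \<in> insert 1 ((\<lambda>i. Suc (Suc i)) ` {..<k})"
      by (cases "x = 1") (auto simp: image_iff intro!: bexI[of _ "x - 2"])
  qed auto
  also have "(\<Sum>x\<in>insert 1 ((\<lambda>i. Suc (Suc i)) ` {..<k}). pmf (?F x) d * pmf (parent_pmf \<theta> (Suc k)) x)
     = pmf (?F 1) d * pmf (parent_pmf \<theta> (Suc k)) 1 +
       (\<Sum>i<k. pmf (?F (Suc (Suc i))) d * pmf (parent_pmf \<theta> (Suc k)) (Suc (Suc i)))"
    by (subst sum.insert) (auto simp: sum.reindex inj_on_def)
  also have "\<dots> = (if d = 1 then 1 else 0) * (\<theta> / (\<theta> + real k)) +
       (\<Sum>i<k. sh (q \<theta> i) d * (1 / (\<theta> + real k)))"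
    using assms by (simp add: parent_pmf_val pmf_map_Suc pmf_dl)
  also have "\<dots> = (if d = 1 then 1 else 0) * (\<theta> / (\<theta> + real k)) + (\<Sum>i<k. sh (q \<theta> i) d) / (\<theta> + real k)"
    by (simp add: sum_divide_distrib)
  finally have eq: "q \<theta> k d = (if d = 1 then 1 else 0) * (\<theta> / (\<theta> + real k)) + (\<Sum>i<k. sh (q \<theta> i) d) / (\<theta> + real k)" .
  have B: "\<theta> + real k > 0" using assms by simp
  have "(\<theta> + real k) * q \<theta> k d = (\<theta> + real k) * ((if d = 1 then 1 else 0) * (\<theta> / (\<theta> + real k))) + (\<theta> + real k) * ((\<Sum>i<k. sh (q \<theta> i) d) / (\<theta> + real k))"
    unfolding eq by (simp only: distrib_left)
  also have "\<dots> = \<theta> * (if d = 1 then 1 else 0) + (\<Sum>i<k. sh (q \<theta> i) d)"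
    using B by simp
  finally show ?thesis .
qed

lemma q_0: "\<theta> > 0 \<Longrightarrow> q \<theta> 0 d = (if d = 1 then 1 else 0)"
  using q_R[of \<theta> 0 d] by auto

lemma q_Suc:
  assumes "\<theta> > 0"
  shows "q \<theta> (Suc k) d = ((\<theta> + real k) * q \<theta> k d + sh (q \<theta> k) d) / (\<theta> + real k + 1)"
proof -
  have "(\<theta> + real (Suc k)) * q \<theta> (Suc k) d = (\<theta> + real k) * q \<theta> k d + sh (q \<theta> k) d"
    using q_R[OF assms, of "Suc k" d] q_R[OF assms, of k d] by simp
  then show ?thesis using assms by (simp add: field_simps)
qed

lemma q_supp: "\<theta> > 0 \<Longrightarrow> d = 0 \<or> d > Suc k \<Longrightarrow> q \<theta> k d = 0"
proof (induction k arbitrary: d)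
  case 0 then show ?case by (auto simp: q_0)
next
  case (Suc k)
  have "q \<theta> k d = 0" using Suc by auto
  moreover have "sh (q \<theta> k) d = 0" using Suc by (cases d) auto
  ultimately show ?case using q_Suc[OF Suc.prems(1)] by simp
qed

definition EE :: "real \<Rightarrow> nat \<Rightarrow> (nat \<Rightarrow> 'a::real_vector) \<Rightarrow> 'a" where
  "EE \<theta> k f = (\<Sum>d\<le>Suc k. q \<theta> k d *\<^sub>R f d)"

lemma EE_0: "\<theta> > 0 \<Longrightarrow> EE \<theta> 0 f = f 1"
  by (simp add: EE_def q_0)

lemma EE_Suc:
  assumes "\<theta> > 0"
  shows "EE \<theta> (Suc k) f = ((\<theta> + real k) / (\<theta> + real k + 1)) *\<^sub>R EE \<theta> k f
     + (1 / (\<theta> + real k + 1)) *\<^sub>R EE \<theta> k (\<lambda>d. f (Suc d))"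
proof -
  have pos: "\<theta> + real k + 1 > 0" using assms by simp
  have "EE \<theta> (Suc k) f = (\<Sum>d\<le>Suc (Suc k). ((\<theta> + real k) / (\<theta> + real k + 1) * q \<theta> k d) *\<^sub>R f d)
      + (\<Sum>d\<le>Suc (Suc k). (sh (q \<theta> k) d / (\<theta> + real k + 1)) *\<^sub>R f d)"
  proof -
    have pt: "\<And>x. q \<theta> (Suc k) x = (\<theta> + real k) / (\<theta> + real k + 1) * q \<theta> k x + sh (q \<theta> k) x / (\<theta> + real k + 1)"
      by (simp add: q_Suc[OF assms] add_divide_distrib algebra_simps)
    show ?thesis unfolding EE_def sum.distrib[symmetric] pt scaleR_add_left ..
  qed
  also have "(\<Sum>d\<le>Suc (Suc k). ((\<theta> + real k) / (\<theta> + real k + 1) * q \<theta> k d) *\<^sub>R f d)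
     = ((\<theta> + real k) / (\<theta> + real k + 1)) *\<^sub>R EE \<theta> k f"
    using q_supp[OF assms, of "Suc (Suc k)" k]
    unfolding EE_def by (simp add: scaleR_sum_right del: sum.atMost_Suc) (simp add: sum.atMost_Suc[of _ "Suc k"])
  also have "(\<Sum>d\<le>Suc (Suc k). (sh (q \<theta> k) d / (\<theta> + real k + 1)) *\<^sub>R f d)
     = (\<Sum>d\<le>Suc k. (q \<theta> k d / (\<theta> + real k + 1)) *\<^sub>R f (Suc d))"
    by (subst sum.atMost_Suc_shift) simp
  also have "\<dots> = (1 / (\<theta> + real k + 1)) *\<^sub>R EE \<theta> k (\<lambda>d. f (Suc d))"
    unfolding EE_def by (simp add: scaleR_sum_right del: sum.atMost_Suc)
  finally show ?thesis .
qed

lemma EE_linear: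
  "EE \<theta> k (\<lambda>d. a *\<^sub>R f d + b *\<^sub>R g d) = a *\<^sub>R EE \<theta> k f + b *\<^sub>R EE \<theta> k g"
  unfolding EE_def scaleR_sum_right sum.distrib[symmetric] by (rule sum.cong) (simp_all add: scaleR_add_right mult.commute)

lemma EE_const: "\<theta> > 0 \<Longrightarrow> EE \<theta> k (\<lambda>_. c) = c"
proof (induction k)
  case 0 then show ?case by (simp add: EE_0)
next
  case (Suc k)
  then show ?case using EE_Suc[OF Suc.prems, of k "\<lambda>_. c"]
    by (simp add: scaleR_add_left[symmetric] add_divide_distrib[symmetric])
qed

lemma expectation_Ex:
  fixes f :: "nat \<Rightarrow> 'b::{banach, second_countable_topology}"
  assumes "\<theta> > 0"
  shows "measure_pmf.expectation (depth_law \<theta> (Suc (Suc k))) f = EE \<theta> k f"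
proof -
  have "measure_pmf.expectation (depth_law \<theta> (Suc (Suc k))) f
      = (\<Sum>a\<in>{..Suc k}. pmf (depth_law \<theta> (Suc (Suc k))) a *\<^sub>R f a)"
  proof (rule integral_measure_pmf)
    fix a assume "a \<in> set_pmf (depth_law \<theta> (Suc (Suc k)))"
    then have "q \<theta> k a \<noteq> 0" by (simp add: q_def set_pmf_iff)
    then show "a \<in> {..Suc k}" using q_supp[OF assms, of a k] by (meson atMost_iff not_le)
  qed simp
  then show ?thesis by (simp add: EE_def q_def)
qed

lemma q_nonneg: "q \<theta> k d \<ge> 0" by (simp add: q_def)


lemma EE_add: "EE \<theta> k (\<lambda>d. f d + g d) = EE \<theta> k f + EE \<theta> k g"
  using EE_linear[of \<theta> k 1 f 1 g] by simp

lemma EE_scale: "EE \<theta> k (\<lambda>d. c *\<^sub>R f d) = c *\<^sub>R EE \<theta> k f"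
  using EE_linear[of \<theta> k c f 0 f] by simp

lemma EE_mult: "EE \<theta> k (\<lambda>d. c * f d :: real) = c * EE \<theta> k f"
  using EE_scale[of \<theta> k c f] by simp

definition hsum :: "real \<Rightarrow> nat \<Rightarrow> real" where
  "hsum \<theta> k = (\<Sum>i=1..k. 1 / (\<theta> + real i))"
definition hsum2 :: "real \<Rightarrow> nat \<Rightarrow> real" where
  "hsum2 \<theta> k = (\<Sum>i=1..k. (1 / (\<theta> + real i))^2)"

lemma hsum_Suc: "hsum \<theta> (Suc k) = hsum \<theta> k + 1 / (\<theta> + real k + 1)"
  by (simp add: hsum_def add_ac)
lemma hsum2_Suc: "hsum2 \<theta> (Suc k) = hsum2 \<theta> k + (1 / (\<theta> + real k + 1))^2"
  by (simp add: hsum2_def add_ac)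

lemma mean_EE: "\<theta> > 0 \<Longrightarrow> EE \<theta> k real = 1 + hsum \<theta> k"
proof (induction k)
  case 0 then show ?case by (simp add: EE_0 hsum_def)
next
  case (Suc k)
  have pos: "\<theta> + real k + 1 > 0" using Suc by simp
  have "EE \<theta> k (\<lambda>d. 1 + real d) = 1 + EE \<theta> k real"
    using EE_add[of \<theta> k "\<lambda>_. 1" real] EE_const[OF Suc.prems, of k 1] by simp
  then have "EE \<theta> (Suc k) real = (\<theta> + real k) / (\<theta> + real k + 1) * (1 + hsum \<theta> k)
     + 1 / (\<theta> + real k + 1) * (1 + hsum \<theta> k + 1)"
    using EE_Suc[OF Suc.prems, of k real] Suc by simp
  also have "\<dots> = 1 + hsum \<theta> (Suc k)"
  proof -
    have c1: "(\<theta> + real k) / (\<theta> + real k + 1) = 1 - 1 / (\<theta> + real k + 1)"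
      using pos by (simp add: field_simps)
    show ?thesis unfolding c1 by (simp add: hsum_Suc algebra_simps add_divide_distrib)
  qed
  finally show ?case .
qed

lemma sq_EE: "\<theta> > 0 \<Longrightarrow> EE \<theta> k (\<lambda>d. (real d)^2) = hsum \<theta> k - hsum2 \<theta> k + (1 + hsum \<theta> k)^2"
proof (induction k)
  case 0 then show ?case by (simp add: EE_0 hsum_def hsum2_def)
next
  case (Suc k)
  have pos: "\<theta> + real k + 1 > 0" using Suc by simp
  have "EE \<theta> k (\<lambda>d. (real (Suc d))^2) = EE \<theta> k (\<lambda>d. (real d)^2) + 2 * EE \<theta> k real + 1"
  proof -
    have "EE \<theta> k (\<lambda>d. (real (Suc d))^2) = EE \<theta> k (\<lambda>d. (real d)^2 + (2 * real d + 1))"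
      by (simp add: power2_eq_square algebra_simps)
    also have "\<dots> = EE \<theta> k (\<lambda>d. (real d)^2) + (2 * EE \<theta> k real + 1)"
      using EE_add[of \<theta> k "\<lambda>d. (real d)^2" "\<lambda>d. 2 * real d + 1"] EE_add[of \<theta> k "\<lambda>d. 2 * real d" "\<lambda>_. 1"]
        EE_mult[of \<theta> k 2 real] EE_const[OF Suc.prems, of k 1] by simp
    finally show ?thesis by simp
  qed
  then have "EE \<theta> (Suc k) (\<lambda>d. (real d)^2) = (\<theta> + real k) / (\<theta> + real k + 1) * (hsum \<theta> k - hsum2 \<theta> k + (1 + hsum \<theta> k)^2)
     + 1 / (\<theta> + real k + 1) * ((hsum \<theta> k - hsum2 \<theta> k + (1 + hsum \<theta> k)^2) + 2 * (1 + hsum \<theta> k) + 1)"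
    using EE_Suc[OF Suc.prems, of k "\<lambda>d. (real d)^2"] Suc mean_EE[OF Suc.prems, of k] by simp
  also have "\<dots> = hsum \<theta> (Suc k) - hsum2 \<theta> (Suc k) + (1 + hsum \<theta> (Suc k))^2"
  proof -
    have c1: "(\<theta> + real k) / (\<theta> + real k + 1) = 1 - 1 / (\<theta> + real k + 1)"
      using pos by (simp add: field_simps)
    show ?thesis unfolding c1 by (simp add: hsum_Suc hsum2_Suc algebra_simps power2_eq_square)
  qed
  finally show ?case .
qed

lemma var_EE: "\<theta> > 0 \<Longrightarrow> EE \<theta> k (\<lambda>d. (real d - (1 + hsum \<theta> k))^2) = hsum \<theta> k - hsum2 \<theta> k"
proof -
  assume t: "\<theta> > 0"
  let ?m = "1 + hsum \<theta> k"
  have "EE \<theta> k (\<lambda>d. (real d - ?m)^2) = EE \<theta> k (\<lambda>d. (real d)^2 + ((-2 * ?m) * real d + ?m^2))"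
    by (simp add: power2_eq_square algebra_simps)
  also have "\<dots> = EE \<theta> k (\<lambda>d. (real d)^2) + ((-2 * ?m) * EE \<theta> k real + ?m^2)"
    using EE_add[of \<theta> k "\<lambda>d. (real d)^2" "\<lambda>d. (-2 * ?m) * real d + ?m^2"]
      EE_add[of \<theta> k "\<lambda>d. (-2 * ?m) * real d" "\<lambda>_. ?m^2"]
      EE_mult[of \<theta> k "-2 * ?m" real] EE_const[OF t, of k "?m^2"] by simp
  also have "\<dots> = hsum \<theta> k - hsum2 \<theta> k"
    using sq_EE[OF t, of k] mean_EE[OF t, of k] by (simp add: power2_eq_square algebra_simps)
  finally show ?thesis .
qed

lemma E_formula: "\<theta> > 0 \<Longrightarrow> measure_pmf.expectation (depth_law \<theta> (Suc (Suc k))) real = 1 + hsum \<theta> k"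
  by (simp add: expectation_Ex mean_EE)

lemma V_formula: "\<theta> > 0 \<Longrightarrow> measure_pmf.variance (depth_law \<theta> (Suc (Suc k))) real = hsum \<theta> k - hsum2 \<theta> k"
  by (simp add: expectation_Ex mean_EE var_EE)

lemma hsum_alt: "hsum \<theta> k = (\<Sum>j<k. inverse ((\<theta> + 1) + real j))"
  unfolding hsum_def One_nat_def sum.atLeast1_atMost_eq by (simp add: divide_inverse add_ac)

lemma hsum2_alt: "hsum2 \<theta> k = (\<Sum>j<k. inverse (((\<theta> + 1) + real j)^2))"
  unfolding hsum2_def One_nat_def sum.atLeast1_atMost_eq by (simp add: divide_inverse add_ac power_inverse)

lemma hsum_lim: "\<theta> > 0 \<Longrightarrow> (\<lambda>k. hsum \<theta> k - ln (real k) + Digamma (\<theta> + 1)) \<longlonglongrightarrow> 0"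
proof -
  assume t: "\<theta> > 0"
  have "(\<lambda>m. ln (real m) - (\<Sum>n<m. inverse ((\<theta> + 1) + real n))) \<longlonglongrightarrow> Digamma (\<theta> + 1)"
    using Digamma_LIMSEQ[of "\<theta> + 1"] t by simp
  then have "(\<lambda>m. Digamma (\<theta> + 1) - (ln (real m) - (\<Sum>n<m. inverse ((\<theta> + 1) + real n)))) \<longlonglongrightarrow> Digamma (\<theta> + 1) - Digamma (\<theta> + 1)"
    by (intro tendsto_intros)
  then show ?thesis by (simp add: hsum_alt algebra_simps)
qed

lemma hsum2_lim: "\<theta> > 0 \<Longrightarrow> hsum2 \<theta> \<longlonglongrightarrow> Polygamma 1 (\<theta> + 1)"
proof -
  assume t: "\<theta> > 0"
  have "(\<lambda>k. inverse (((\<theta> + 1) + real k)^Suc 1)) sums ((-1) ^ Suc 1 * Polygamma 1 (\<theta> + 1) / fact 1)"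
    by (rule Polygamma_LIMSEQ) (use t in auto)
  then show ?thesis unfolding sums_def hsum2_alt[abs_def] by (simp add: power2_eq_square)
qed

lemma ln_shift_lim: "(\<lambda>k. ln (real k) - ln (real (k + 2))) \<longlonglongrightarrow> 0"
  by real_asymp

lemma E_lim:
  assumes "\<theta> > 0"
  shows "(\<lambda>n. measure_pmf.expectation (depth_law \<theta> n) real - (ln (real n) - Digamma (\<theta> + 1) + 1)) \<longlonglongrightarrow> 0"
proof (rule LIMSEQ_offset[where k = 2])
  have "(\<lambda>k. (hsum \<theta> k - ln (real k) + Digamma (\<theta> + 1)) + (ln (real k) - ln (real (k + 2)))) \<longlonglongrightarrow> 0 + 0"
    by (intro tendsto_intros hsum_lim[OF assms] ln_shift_lim)
  then show "(\<lambda>k. measure_pmf.expectation (depth_law \<theta> (k + 2)) real - (ln (real (k + 2)) - Digamma (\<theta> + 1) + 1)) \<longlonglongrightarrow> 0"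
  proof -
    have eqs: "\<And>k. measure_pmf.expectation (depth_law \<theta> (k + 2)) real = 1 + hsum \<theta> k"
      by (metis E_formula[OF assms] add_2_eq_Suc')
    show ?thesis unfolding eqs using \<open>(\<lambda>k. _) \<longlonglongrightarrow> 0 + 0\<close> by (simp add: algebra_simps)
  qed
qed

lemma V_lim:
  assumes "\<theta> > 0"
  shows "(\<lambda>n. measure_pmf.variance (depth_law \<theta> n) real - (ln (real n) - Digamma (\<theta> + 1) - Polygamma 1 (\<theta> + 1))) \<longlonglongrightarrow> 0"
proof (rule LIMSEQ_offset[where k = 2])
  have "(\<lambda>k. (hsum \<theta> k - ln (real k) + Digamma (\<theta> + 1)) + (ln (real k) - ln (real (k + 2))) - (hsum2 \<theta> k - Polygamma 1 (\<theta> + 1))) \<longlonglongrightarrow> 0 + 0 - (Polygamma 1 (\<theta> + 1) - Polygamma 1 (\<theta> + 1))"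
    by (intro tendsto_intros hsum_lim[OF assms] ln_shift_lim hsum2_lim[OF assms])
  then show "(\<lambda>k. measure_pmf.variance (depth_law \<theta> (k + 2)) real - (ln (real (k + 2)) - Digamma (\<theta> + 1) - Polygamma 1 (\<theta> + 1))) \<longlonglongrightarrow> 0"
  proof -
    have eqs: "\<And>k. measure_pmf.variance (depth_law \<theta> (k + 2)) real = hsum \<theta> k - hsum2 \<theta> k"
      by (metis V_formula[OF assms] add_2_eq_Suc')
    show ?thesis unfolding eqs using \<open>(\<lambda>k. _) \<longlonglongrightarrow> 0 + 0 - _\<close> by (simp add: algebra_simps)
  qed
qed


lemma iexp_add: "iexp (a + b) = iexp a * iexp b"
  by (simp add: distrib_left exp_add)

lemma EE_cmult:
  fixes c :: "'a::real_algebra"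
  shows "EE \<theta> k (\<lambda>d. c * f d) = c * EE \<theta> k f"
  unfolding EE_def by (simp add: sum_distrib_left mult_scaleR_right del: sum.atMost_Suc)

definition aC :: "real \<Rightarrow> real \<Rightarrow> complex" where
  "aC p s = of_real (1 - p) * iexp (- s * p) + of_real p * iexp (s * (1 - p))"

lemma char_prod:
  assumes "\<theta> > 0"
  shows "EE \<theta> k (\<lambda>d. iexp (s * (real d - (1 + hsum \<theta> k)))) = (\<Prod>i=1..k. aC (1 / (\<theta> + real i)) s)"
proof (induction k)
  case 0 then show ?case by (simp add: EE_0[OF assms] hsum_def)
next
  case (Suc k)
  define c where "c = 1 / (\<theta> + real k + 1)"
  define m where "m = 1 + hsum \<theta> k"
  have pos: "\<theta> + real k + 1 > 0" using assms by simp
  have m': "1 + hsum \<theta> (Suc k) = m + c" by (simp add: m_def c_def hsum_Suc)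
  have c1: "(\<theta> + real k) / (\<theta> + real k + 1) = 1 - c" using pos by (simp add: c_def field_simps)
  have f1: "iexp (s * (real d - (m + c))) = iexp (- s * c) * iexp (s * (real d - m))" for d
  proof -
    have e: "s * (real d - (m + c)) = - s * c + s * (real d - m)" by (simp add: algebra_simps)
    show ?thesis by (simp only: e iexp_add)
  qed
  have f2: "iexp (s * (real (Suc d) - (m + c))) = iexp (s * (1 - c)) * iexp (s * (real d - m))" for d
  proof -
    have e: "s * (real (Suc d) - (m + c)) = s * (1 - c) + s * (real d - m)" by (simp add: algebra_simps)
    show ?thesis by (simp only: e iexp_add)
  qed
  have "EE \<theta> (Suc k) (\<lambda>d. iexp (s * (real d - (m + c)))) =
      (1 - c) *\<^sub>R EE \<theta> k (\<lambda>d. iexp (s * (real d - (m + c)))) + c *\<^sub>R EE \<theta> k (\<lambda>d. iexp (s * (real (Suc d) - (m + c))))"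
    using EE_Suc[OF assms, of k "\<lambda>d. iexp (s * (real d - (m + c)))"] c1 by (simp add: c_def)
  also have "\<dots> = aC c s * EE \<theta> k (\<lambda>d. iexp (s * (real d - m)))"
    unfolding f2 unfolding f1 EE_cmult by (simp add: aC_def scaleR_conv_of_real algebra_simps)
  also have "EE \<theta> k (\<lambda>d. iexp (s * (real d - m))) = (\<Prod>i=1..k. aC (1 / (\<theta> + real i)) s)"
    using Suc by (simp add: m_def)
  finally show ?case by (simp add: m' c_def add_ac mult.commute)
qed

lemma iexp_approx2':
  "cmod (iexp x - (1 + \<i> * of_real x - of_real (x^2 / 2))) \<le> \<bar>x\<bar>^3 / 6"
proof -
  have "(\<Sum>k\<le>2. (\<i> * complex_of_real x)^k / fact k) = 1 + \<i> * of_real x - of_real (x^2 / 2)"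
    by (simp add: numeral_2_eq_2 power2_eq_square field_simps)
  moreover have "fact (Suc 2) = (6::real)" by (simp add: numeral_eq_Suc)
  ultimately show ?thesis using iexp_approx1[of x 2] by (simp add: numeral_eq_Suc)
qed

lemma aC_approx:
  assumes p: "0 \<le> p" "p \<le> 1"
  shows "cmod (aC p s - of_real (1 - p * (1 - p) * s^2 / 2)) \<le> p * (1 - p) * \<bar>s\<bar>^3 / 6"
proof -
  define T1 where "T1 = 1 + \<i> * of_real (- s * p) - of_real ((- s * p)^2 / 2)"
  define T2 where "T2 = 1 + \<i> * of_real (s * (1 - p)) - of_real ((s * (1 - p))^2 / 2)"
  have T: "of_real (1 - p * (1 - p) * s^2 / 2) = of_real (1 - p) * T1 + of_real p * T2"
    by (simp add: T1_def T2_def complex_eq_iff field_simps power2_eq_square)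
  have "aC p s - of_real (1 - p * (1 - p) * s^2 / 2) =
      of_real (1 - p) * (iexp (- s * p) - T1) + of_real p * (iexp (s * (1 - p)) - T2)"
    unfolding T aC_def by (simp add: algebra_simps)
  also have "cmod \<dots> \<le> (1 - p) * cmod (iexp (- s * p) - T1) + p * cmod (iexp (s * (1 - p)) - T2)"
  proof -
    have n1: "cmod (1 - complex_of_real p) = 1 - p"
      using p by (subst of_real_1[symmetric], subst of_real_diff[symmetric], subst norm_of_real) simp
    show ?thesis using p by (intro order.trans[OF norm_triangle_ineq]) (simp add: norm_mult n1)
  qed
  also have "\<dots> \<le> (1 - p) * (\<bar>- s * p\<bar>^3 / 6) + p * (\<bar>s * (1 - p)\<bar>^3 / 6)"
    using p unfolding T1_def T2_def
    by (intro add_mono mult_left_mono iexp_approx2') auto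
  also have "\<dots> = p * (1 - p) * \<bar>s\<bar>^3 * (p^2 + (1 - p)^2) / 6"
  proof -
    have a1: "\<bar>s * (1 - p)\<bar> = \<bar>s\<bar> * (1 - p)" using p by (simp add: abs_mult)
    have a2: "\<bar>- s * p\<bar> = \<bar>s\<bar> * p" using p by (simp add: abs_mult)
    show ?thesis unfolding a1 a2 by (simp add: field_simps power2_eq_square power3_eq_cube)
  qed
  also have "\<dots> \<le> p * (1 - p) * \<bar>s\<bar>^3 * 1 / 6"
  proof -
    have "p * p \<le> p * 1" using p by (intro mult_left_mono) auto
    then have "p^2 + (1 - p)^2 \<le> 1" by (simp add: power2_eq_square algebra_simps)
    moreover have "p * (1 - p) * \<bar>s\<bar>^3 \<ge> 0" using p by simp
    ultimately show ?thesis by (intro divide_right_mono mult_left_mono) auto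
  qed
  finally show ?thesis by simp
qed

lemma exp_neg_approx:
  assumes "x \<ge> (0::real)"
  shows "\<bar>exp (- x) - (1 - x)\<bar> \<le> x^2 / 2"
proof -
  have lo: "exp (- x) \<ge> 1 - x" using exp_ge_add_one_self[of "- x"] by simp
  have "(\<lambda>y. 1 - y + y^2 / 2 - exp (- y)) 0 \<le> (\<lambda>y. 1 - y + y^2 / 2 - exp (- y)) x"
  proof (rule DERIV_nonneg_imp_nondecreasing[OF assms])
    fix y :: real assume "0 \<le> y" "y \<le> x"
    have "DERIV (\<lambda>y. 1 - y + y^2 / 2 - exp (- y)) y :> (- 1 + y + exp (- y))"
      by (auto intro!: derivative_eq_intros)
    moreover have "- 1 + y + exp (- y) \<ge> 0" using exp_ge_add_one_self[of "- y"] by simp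
    ultimately show "\<exists>d. DERIV (\<lambda>y. 1 - y + y^2 / 2 - exp (- y)) y :> d \<and> d \<ge> 0" by blast
  qed
  then have "exp (- x) \<le> 1 - x + x^2 / 2" by simp
  then show ?thesis using lo by simp
qed

lemma prod_diff_bound:
  fixes a b :: "nat \<Rightarrow> complex"
  assumes "\<And>i. i \<ge> 1 \<Longrightarrow> cmod (a i) \<le> 1" "\<And>i. i \<ge> 1 \<Longrightarrow> cmod (b i) \<le> 1"
  shows "cmod ((\<Prod>i=1..k. a i) - (\<Prod>i=1..k. b i)) \<le> (\<Sum>i=1..k. cmod (a i - b i))"
proof (induction k)
  case 0 then show ?case by simp
next
  case (Suc k)
  let ?A = "\<Prod>i=1..k. a i" and ?B = "\<Prod>i=1..k. b i"
  have nB: "cmod ?B \<le> 1" unfolding prod_norm[symmetric] by (rule prod_le_1) (use assms(2) in auto)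
  have "?A * a (Suc k) - ?B * b (Suc k) = (?A - ?B) * a (Suc k) + ?B * (a (Suc k) - b (Suc k))"
    by (simp add: algebra_simps)
  then have "cmod (?A * a (Suc k) - ?B * b (Suc k)) \<le> cmod (?A - ?B) * cmod (a (Suc k)) + cmod ?B * cmod (a (Suc k) - b (Suc k))"
    by (metis norm_mult norm_triangle_ineq)
  also have "\<dots> \<le> cmod (?A - ?B) * 1 + 1 * cmod (a (Suc k) - b (Suc k))"
    using assms nB by (intro add_mono mult_mono) auto
  finally show ?case using Suc by simp
qed


lemma aC_norm: assumes "0 \<le> p" "p \<le> 1" shows "cmod (aC p s) \<le> 1"
proof -
  have n1: "cmod (1 - complex_of_real p) = 1 - p"
    using assms by (subst of_real_1[symmetric], subst of_real_diff[symmetric], subst norm_of_real) simp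
  have "cmod (aC p s) \<le> cmod (of_real (1 - p) * iexp (- s * p)) + cmod (of_real p * iexp (s * (1 - p)))"
    unfolding aC_def by (rule norm_triangle_ineq)
  also have "\<dots> = (1 - p) + p" using assms n1 by (simp add: norm_mult)
  finally show ?thesis by simp
qed

lemma char_bound:
  assumes t0: "\<theta> > 0" and r: "r > 0" "r^2 = hsum \<theta> k - hsum2 \<theta> k"
  shows "cmod ((\<Prod>i=1..k. aC (1 / (\<theta> + real i)) (t / r)) - of_real (exp (- (t^2) / 2)))
     \<le> \<bar>t\<bar>^3 / (6 * r) + t^4 / (8 * r^2)"
proof -
  define p where "p i = 1 / (\<theta> + real i)" for i
  define s where "s = t / r"
  define x where "x i = p i * (1 - p i) * s^2 / 2" for i
  have hp: "0 \<le> p i \<and> p i \<le> 1" if "i \<ge> 1" for i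
    using that t0 by (auto simp: p_def divide_simps)
  have hpp: "0 \<le> p i * (1 - p i) \<and> p i * (1 - p i) \<le> 1" if "i \<ge> 1" for i
    using hp[OF that] by (auto simp: mult_le_one)
  have sumV: "(\<Sum>i=1..k. p i * (1 - p i)) = r^2"
    unfolding r(2) hsum_def hsum2_def p_def by (simp add: sum_subtractf[symmetric] algebra_simps power2_eq_square)
  have prodb: "(\<Prod>i=1..k. complex_of_real (exp (- x i))) = of_real (exp (- (t^2) / 2))"
  proof -
    have "(\<Prod>i=1..k. complex_of_real (exp (- x i))) = of_real (exp (\<Sum>i=1..k. - x i))"
      by (simp add: exp_sum)
    also have "(\<Sum>i=1..k. - x i) = - ((\<Sum>i=1..k. p i * (1 - p i)) * s^2 / 2)"
      by (simp add: x_def sum_negf sum_divide_distrib[symmetric] sum_distrib_right)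
    also have "\<dots> = - (t^2) / 2" unfolding sumV s_def using r(1) by (simp add: power_divide)
    finally show ?thesis .
  qed
  have each: "cmod (aC (p i) s - of_real (exp (- x i))) \<le> p i * (1 - p i) * \<bar>s\<bar>^3 / 6 + p i * (1 - p i) * s^4 / 8"
    if "i \<ge> 1" for i
  proof -
    have x0: "x i \<ge> 0" using hpp[OF that] by (simp add: x_def)
    have "cmod (aC (p i) s - of_real (exp (- x i))) \<le>
        cmod (aC (p i) s - of_real (1 - x i)) + cmod (of_real (1 - x i) - complex_of_real (exp (- x i)))"
      using norm_triangle_ineq[of "aC (p i) s - of_real (1 - x i)" "of_real (1 - x i) - of_real (exp (- x i))"] by simp
    also have "cmod (aC (p i) s - of_real (1 - x i)) \<le> p i * (1 - p i) * \<bar>s\<bar>^3 / 6"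
      using aC_approx[of "p i" s] hp[OF that] by (simp add: x_def)
    also have "cmod (of_real (1 - x i) - complex_of_real (exp (- x i))) = \<bar>exp (- x i) - (1 - x i)\<bar>"
      by (metis of_real_diff norm_of_real abs_minus_commute)
    also have "\<dots> \<le> (x i)^2 / 2" by (rule exp_neg_approx[OF x0])
    also have "(x i)^2 / 2 = (p i * (1 - p i))^2 * s^4 / 8" by (simp add: x_def power2_eq_square power4_eq_xxxx)
    also have "\<dots> \<le> (p i * (1 - p i)) * s^4 / 8"
    proof -
      have "(p i * (1 - p i))^2 \<le> p i * (1 - p i) * 1" using hpp[OF that]
        unfolding power2_eq_square by (intro mult_left_mono) auto
      then show ?thesis by (intro divide_right_mono mult_right_mono) auto
    qed
    finally show ?thesis by simp
  qed
  have "cmod ((\<Prod>i=1..k. aC (p i) s) - (\<Prod>i=1..k. complex_of_real (exp (- x i))))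
      \<le> (\<Sum>i=1..k. cmod (aC (p i) s - of_real (exp (- x i))))"
  proof (rule prod_diff_bound)
    fix i :: nat assume "i \<ge> 1"
    then show "cmod (aC (p i) s) \<le> 1" using aC_norm hp by blast
    show "cmod (complex_of_real (exp (- x i))) \<le> 1"
      using hpp[OF \<open>i \<ge> 1\<close>] by (simp add: x_def)
  qed
  also have "\<dots> \<le> (\<Sum>i=1..k. p i * (1 - p i) * \<bar>s\<bar>^3 / 6 + p i * (1 - p i) * s^4 / 8)"
    by (rule sum_mono) (use each in auto)
  also have "\<dots> = r^2 * \<bar>s\<bar>^3 / 6 + r^2 * s^4 / 8"
    by (simp add: sum.distrib sum_divide_distrib[symmetric] sum_distrib_right[symmetric] sumV[unfolded One_nat_def])
  also have "\<dots> = \<bar>t\<bar>^3 / (6 * r) + t^4 / (8 * r^2)"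
    using r(1) by (simp add: s_def abs_divide power_divide field_simps power2_eq_square power3_eq_cube power4_eq_xxxx)
  finally show ?thesis unfolding prodb by (simp add: p_def s_def)
qed

lemma V_formula2: "\<theta> > 0 \<Longrightarrow> measure_pmf.expectation (depth_law \<theta> (Suc (Suc k))) (\<lambda>x. (real x - (1 + hsum \<theta> k))^2) = hsum \<theta> k - hsum2 \<theta> k"
  by (simp add: expectation_Ex var_EE)

lemma char_depth:
  assumes t0: "\<theta> > 0"
  shows "char (distr (measure_pmf (depth_law \<theta> (Suc (Suc k)))) borel
      (\<lambda>d. (real d - measure_pmf.expectation (depth_law \<theta> (Suc (Suc k))) real) /
           sqrt (measure_pmf.variance (depth_law \<theta> (Suc (Suc k))) real))) t
    = (\<Prod>i=1..k. aC (1 / (\<theta> + real i)) (t / sqrt (hsum \<theta> k - hsum2 \<theta> k)))"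
proof -
  define r where "r = sqrt (hsum \<theta> k - hsum2 \<theta> k)"
  have "char (distr (measure_pmf (depth_law \<theta> (Suc (Suc k)))) borel
      (\<lambda>d. (real d - measure_pmf.expectation (depth_law \<theta> (Suc (Suc k))) real) /
           sqrt (measure_pmf.variance (depth_law \<theta> (Suc (Suc k))) real))) t
     = measure_pmf.expectation (depth_law \<theta> (Suc (Suc k))) (\<lambda>d. iexp (t * ((real d - (1 + hsum \<theta> k)) / r)))"
    unfolding char_def E_formula[OF t0] r_def
    by (subst integral_distr) (auto simp: V_formula2[OF t0])
  also have "\<dots> = EE \<theta> k (\<lambda>d. iexp ((t / r) * (real d - (1 + hsum \<theta> k))))"
    by (simp add: expectation_Ex[OF t0])
  also have "\<dots> = (\<Prod>i=1..k. aC (1 / (\<theta> + real i)) (t / r))"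
    by (rule char_prod[OF t0])
  finally show ?thesis by (simp add: r_def)
qed

lemma V_at_top:
  assumes t0: "\<theta> > 0"
  shows "filterlim (\<lambda>k. hsum \<theta> k - hsum2 \<theta> k) at_top sequentially"
proof -
  have lim: "(\<lambda>k. (hsum \<theta> k - ln (real k) + Digamma (\<theta> + 1)) - hsum2 \<theta> k - Digamma (\<theta> + 1))
      \<longlonglongrightarrow> 0 - Polygamma 1 (\<theta> + 1) - Digamma (\<theta> + 1)"
    by (intro tendsto_intros hsum_lim[OF t0] hsum2_lim[OF t0])
  have "filterlim (\<lambda>k. ((hsum \<theta> k - ln (real k) + Digamma (\<theta> + 1)) - hsum2 \<theta> k - Digamma (\<theta> + 1)) + ln (real k)) at_top sequentially"
    by (rule filterlim_tendsto_add_at_top[OF lim filterlim_compose[OF ln_at_top filterlim_real_sequentially]])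
  then show ?thesis by simp
qed

lemma CLT_depth:
  assumes t0: "\<theta> > 0"
  shows "weak_conv_m (\<lambda>n. distr (measure_pmf (depth_law \<theta> n)) borel
            (\<lambda>d. (real d - measure_pmf.expectation (depth_law \<theta> n) real) /
                 sqrt (measure_pmf.variance (depth_law \<theta> n) real))) std_normal_distribution"
proof (rule levy_continuity)
  fix n show "real_distribution (distr (measure_pmf (depth_law \<theta> n)) borel
            (\<lambda>d. (real d - measure_pmf.expectation (depth_law \<theta> n) real) /
                 sqrt (measure_pmf.variance (depth_law \<theta> n) real)))"
    by (rule prob_space.real_distribution_distr[OF prob_space_measure_pmf]) simp
next
  show "real_distribution std_normal_distribution" by (rule real_dist_normal_dist)
next
  fix t :: real
  define V where "V k = hsum \<theta> k - hsum2 \<theta> k" for k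
  have Vtop: "filterlim V at_top sequentially" unfolding V_def by (rule V_at_top[OF t0])
  have sq: "filterlim (\<lambda>k. sqrt (V k)) at_top sequentially"
    by (rule filterlim_compose[OF sqrt_at_top Vtop])
  have ev: "eventually (\<lambda>k. V k > 0) sequentially"
    using Vtop by (simp add: filterlim_at_top_dense)
  have g0: "(\<lambda>k. \<bar>t\<bar>^3 / (6 * sqrt (V k)) + t^4 / (8 * (sqrt (V k))^2)) \<longlonglongrightarrow> 0"
  proof -
    have "(\<lambda>k. (\<bar>t\<bar>^3 / 6) / sqrt (V k) + (t^4 / 8) / (sqrt (V k) * sqrt (V k))) \<longlonglongrightarrow> 0 + 0"
      by (intro tendsto_add tendsto_divide_0[OF tendsto_const] filterlim_at_top_imp_at_infinity
            filterlim_at_top_mult_at_top sq)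
    then show ?thesis by (simp add: power2_eq_square)
  qed
  have "(\<lambda>k. char (distr (measure_pmf (depth_law \<theta> (Suc (Suc k)))) borel
            (\<lambda>d. (real d - measure_pmf.expectation (depth_law \<theta> (Suc (Suc k))) real) /
                 sqrt (measure_pmf.variance (depth_law \<theta> (Suc (Suc k))) real))) t
         - complex_of_real (exp (- (t^2) / 2))) \<longlonglongrightarrow> 0"
  proof (rule Lim_null_comparison[OF _ g0])
    show "\<forall>\<^sub>F k in sequentially. cmod (char (distr (measure_pmf (depth_law \<theta> (Suc (Suc k)))) borel
            (\<lambda>d. (real d - measure_pmf.expectation (depth_law \<theta> (Suc (Suc k))) real) /
                 sqrt (measure_pmf.variance (depth_law \<theta> (Suc (Suc k))) real))) t
         - complex_of_real (exp (- (t^2) / 2))) \<le> \<bar>t\<bar>^3 / (6 * sqrt (V k)) + t^4 / (8 * (sqrt (V k))^2)"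
      using ev
    proof eventually_elim
      case (elim k)
      show ?case unfolding char_depth[OF t0] V_def
        by (rule char_bound[OF t0]) (use elim in \<open>auto simp: V_def\<close>)
    qed
  qed
  then have "(\<lambda>k. char (distr (measure_pmf (depth_law \<theta> (k + 2))) borel
            (\<lambda>d. (real d - measure_pmf.expectation (depth_law \<theta> (k + 2)) real) /
                 sqrt (measure_pmf.variance (depth_law \<theta> (k + 2)) real))) t) \<longlonglongrightarrow> complex_of_real (exp (- (t^2) / 2))"
    by (simp add: LIM_zero_iff numeral_2_eq_2)
  then show "(\<lambda>n. char (distr (measure_pmf (depth_law \<theta> n)) borel
            (\<lambda>d. (real d - measure_pmf.expectation (depth_law \<theta> n) real) /
                 sqrt (measure_pmf.variance (depth_law \<theta> n) real))) t) \<longlonglongrightarrow> char std_normal_distribution t"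
    unfolding char_std_normal_distribution by (rule LIMSEQ_offset)
qed


primrec uu :: "real \<Rightarrow> nat \<Rightarrow> nat \<Rightarrow> real" where
  "uu \<theta> 0 d = (if d = 0 then 1 else 0)"
| "uu \<theta> (Suc k) d = (1 - 1 / (\<theta> + real k + 1)) * uu \<theta> k d + (1 / (\<theta> + real k + 1)) * sh (uu \<theta> k) d
     + (1 / (\<theta> + real k + 1))^2 * q \<theta> k d"

lemma q_Suc': "\<theta> > 0 \<Longrightarrow> q \<theta> (Suc k) d = (1 - 1 / (\<theta> + real k + 1)) * q \<theta> k d + (1 / (\<theta> + real k + 1)) * sh (q \<theta> k) d"
proof -
  assume t: "\<theta> > 0"
  have pos: "\<theta> + real k + 1 > 0" using t by simp
  have c1: "1 - 1 / (\<theta> + real k + 1) = (\<theta> + real k) / (\<theta> + real k + 1)" using pos by (simp add: field_simps)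
  show ?thesis unfolding q_Suc[OF t] c1 by (simp add: add_divide_distrib algebra_simps)
qed

lemma uu_nonneg: "\<theta> > 0 \<Longrightarrow> uu \<theta> k d \<ge> 0"
proof (induction k arbitrary: d)
  case 0 then show ?case by simp
next
  case (Suc k)
  have c: "0 \<le> 1 / (\<theta> + real k + 1)" "1 / (\<theta> + real k + 1) \<le> 1" using Suc.prems by auto
  have "sh (uu \<theta> k) d \<ge> 0" using Suc by (simp add: sh_def)
  then show ?case using Suc c q_nonneg[of \<theta> k d] by simp
qed

lemma uu_supp: "\<theta> > 0 \<Longrightarrow> d > k \<Longrightarrow> uu \<theta> k d = 0"
proof (induction k arbitrary: d)
  case 0 then show ?case by simp
next
  case (Suc k)
  have "sh (uu \<theta> k) d = 0" using Suc by (cases d) auto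
  then show ?case using Suc q_supp[of \<theta> d k] by simp
qed

lemma sum_q: "\<theta> > 0 \<Longrightarrow> N \<ge> Suc k \<Longrightarrow> (\<Sum>d\<le>N. q \<theta> k d) = 1"
proof -
  assume t: "\<theta> > 0" and N: "N \<ge> Suc k"
  have "(\<Sum>d\<le>N. q \<theta> k d) = (\<Sum>d\<le>Suc k. q \<theta> k d)"
    by (rule sum.mono_neutral_right) (use N q_supp[OF t] in auto)
  also have "\<dots> = 1" using EE_const[OF t, of k "1::real"] by (simp add: EE_def)
  finally show ?thesis .
qed

lemma sum_sh: "(\<Sum>d\<le>Suc N. sh f d) = (\<Sum>d\<le>N. f d)"
  by (subst sum.atMost_Suc_shift) simp

lemma sum_uu: "\<theta> > 0 \<Longrightarrow> N \<ge> Suc k \<Longrightarrow> (\<Sum>d\<le>N. uu \<theta> k d) = 1 + hsum2 \<theta> k"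
proof (induction k arbitrary: N)
  case 0
  then show ?case by (simp add: hsum2_def)
next
  case (Suc k)
  obtain N' where N: "N = Suc N'" using Suc.prems by (cases N) auto
  let ?c = "1 / (\<theta> + real k + 1)"
  have "(\<Sum>d\<le>N. uu \<theta> (Suc k) d) = (1 - ?c) * (\<Sum>d\<le>N. uu \<theta> k d) + ?c * (\<Sum>d\<le>N. sh (uu \<theta> k) d) + ?c^2 * (\<Sum>d\<le>N. q \<theta> k d)"
    by (simp add: sum.distrib sum_distrib_left del: sum.atMost_Suc)
  also have "(\<Sum>d\<le>N. sh (uu \<theta> k) d) = (\<Sum>d\<le>N'. uu \<theta> k d)" unfolding N by (rule sum_sh)
  also have "(\<Sum>d\<le>N'. uu \<theta> k d) = 1 + hsum2 \<theta> k" using Suc.IH[of N'] Suc.prems N by auto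
  also have "(\<Sum>d\<le>N. uu \<theta> k d) = 1 + hsum2 \<theta> k" using Suc.IH[of N] Suc.prems by auto
  also have "(\<Sum>d\<le>N. q \<theta> k d) = 1" using sum_q[OF Suc.prems(1)] Suc.prems by auto
  finally show ?case by (simp add: hsum2_Suc algebra_simps)
qed

lemma stein_defect:
  assumes t: "\<theta> > 0"
  shows "(1 + hsum \<theta> k) * q \<theta> k d - real (Suc d) * q \<theta> k (Suc d) = sh (uu \<theta> k) d - uu \<theta> k d"
proof (induction k arbitrary: d)
  case 0
  then show ?case by (cases d) (auto simp: q_0[OF t] hsum_def)
next
  case (Suc k)
  define c where "c = 1 / (\<theta> + real k + 1)"
  define l where "l = 1 + hsum \<theta> k"
  have lam: "1 + hsum \<theta> (Suc k) = l + c" by (simp add: hsum_Suc l_def c_def)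
  have qs: "\<And>d. q \<theta> (Suc k) d = (1 - c) * q \<theta> k d + c * sh (q \<theta> k) d"
    using q_Suc'[OF t] by (simp add: c_def)
  have us: "\<And>d. uu \<theta> (Suc k) d = (1 - c) * uu \<theta> k d + c * sh (uu \<theta> k) d + c^2 * q \<theta> k d"
    by (simp add: c_def)
  have shh: "l * sh (q \<theta> k) d - real d * q \<theta> k d = sh (sh (uu \<theta> k)) d - sh (uu \<theta> k) d"
  proof (cases d)
    case 0 then show ?thesis by simp
  next
    case (Suc d') then show ?thesis using Suc.IH[of d'] by (simp add: l_def)
  qed
  have IH': "l * q \<theta> k d - real (Suc d) * q \<theta> k (Suc d) = sh (uu \<theta> k) d - uu \<theta> k d"
    using Suc.IH[of d] by (simp add: l_def)
  have "(1 + hsum \<theta> (Suc k)) * q \<theta> (Suc k) d - real (Suc d) * q \<theta> (Suc k) (Suc d)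
      = (1 - c) * (l * q \<theta> k d - real (Suc d) * q \<theta> k (Suc d)) + c * (l * sh (q \<theta> k) d - real d * q \<theta> k d)
        + c^2 * (sh (q \<theta> k) d - q \<theta> k d)"
    unfolding lam qs by (simp add: algebra_simps power2_eq_square)
  also have "\<dots> = sh (uu \<theta> (Suc k)) d - uu \<theta> (Suc k) d"
    unfolding IH' shh us by (simp add: sh_def algebra_simps)
  finally show ?case .
qed

lemma stein_sum:
  assumes t: "\<theta> > 0"
  shows "(\<Sum>d\<le>Suc k. q \<theta> k d * ((1 + hsum \<theta> k) * C d - (if d = 0 then 0 else real d * C (d - 1))))
       = (\<Sum>d\<le>Suc k. uu \<theta> k d * (C (Suc d) - C d))"
proof -
  let ?l = "1 + hsum \<theta> k"
  have A: "(\<Sum>d\<le>Suc k. q \<theta> k d * (if d = 0 then 0 else real d * C (d - 1)))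
      = (\<Sum>d\<le>Suc k. real (Suc d) * q \<theta> k (Suc d) * C d)"
  proof -
    have "(\<Sum>d\<le>Suc k. q \<theta> k d * (if d = 0 then 0 else real d * C (d - 1)))
        = (\<Sum>d\<le>k. real (Suc d) * q \<theta> k (Suc d) * C d)"
      by (subst sum.atMost_Suc_shift) (simp add: mult_ac)
    also have "\<dots> = (\<Sum>d\<le>Suc k. real (Suc d) * q \<theta> k (Suc d) * C d)"
      using q_supp[OF t, of "Suc (Suc k)" k] by simp
    finally show ?thesis .
  qed
  have B: "(\<Sum>d\<le>Suc k. C d * sh (uu \<theta> k) d) = (\<Sum>d\<le>Suc k. uu \<theta> k d * C (Suc d))"
  proof -
    have "(\<Sum>d\<le>Suc k. C d * sh (uu \<theta> k) d) = (\<Sum>d\<le>k. uu \<theta> k d * C (Suc d))"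
      by (subst sum.atMost_Suc_shift) (simp add: mult_ac)
    also have "\<dots> = (\<Sum>d\<le>Suc k. uu \<theta> k d * C (Suc d))"
      using uu_supp[OF t, of k "Suc k"] by simp
    finally show ?thesis .
  qed
  have "(\<Sum>d\<le>Suc k. q \<theta> k d * (?l * C d - (if d = 0 then 0 else real d * C (d - 1))))
      = (\<Sum>d\<le>Suc k. C d * (?l * q \<theta> k d - real (Suc d) * q \<theta> k (Suc d)))"
    by (simp add: right_diff_distrib sum_subtractf A algebra_simps del: sum.atMost_Suc)
  also have "\<dots> = (\<Sum>d\<le>Suc k. C d * (sh (uu \<theta> k) d - uu \<theta> k d))"
    by (rule sum.cong[OF refl]) (simp only: stein_defect[OF t])
  also have "\<dots> = (\<Sum>d\<le>Suc k. uu \<theta> k d * (C (Suc d) - C d))"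
    by (simp add: right_diff_distrib sum_subtractf B algebra_simps del: sum.atMost_Suc)
  finally show ?thesis .
qed


definition pp :: "real \<Rightarrow> nat \<Rightarrow> real" where
  "pp l j = l ^ j / fact j * exp (- l)"
definition PP :: "real \<Rightarrow> nat \<Rightarrow> real" where
  "PP l d = (\<Sum>i\<le>d. pp l i)"
definition cc :: "real \<Rightarrow> nat \<Rightarrow> nat \<Rightarrow> real" where
  "cc l d j = ((if j \<le> d then 1 else 0) - PP l d) / (l * pp l d)"
definition DD :: "real \<Rightarrow> nat \<Rightarrow> nat \<Rightarrow> real" where
  "DD l d j = cc l (Suc d) j - cc l d j"

context
  fixes l :: real assumes l: "l > 0"
begin

lemma pp_pos: "pp l j > 0"
  using l by (simp add: pp_def)

lemma pp_Suc: "pp l (Suc j) = pp l j * l / real (Suc j)"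
  by (simp add: pp_def field_simps)

lemma pp_sums: "(\<lambda>i. pp l i) sums 1"
proof -
  have "(\<lambda>n. l^n /\<^sub>R fact n * exp (- l)) sums (exp l * exp (- l))"
    by (rule sums_mult2[OF exp_converges])
  then show ?thesis by (simp add: pp_def divide_inverse mult_ac exp_minus)
qed

lemma PP_nonneg: "PP l d \<ge> 0"
  unfolding PP_def using pp_pos by (intro sum_nonneg) (auto intro: less_imp_le)

lemma PP_le1: "PP l d \<le> 1"
proof -
  have "PP l d = (\<Sum>i<Suc d. pp l i)" by (simp add: PP_def lessThan_Suc_atMost)
  also have "\<dots> \<le> suminf (\<lambda>i. pp l i)"
    by (rule sum_le_suminf) (use pp_sums pp_pos in \<open>auto simp: sums_iff intro: less_imp_le\<close>)
  also have "\<dots> = 1" using pp_sums by (simp add: sums_iff)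
  finally show ?thesis .
qed

lemma PP_Suc: "PP l (Suc d) = PP l d + pp l (Suc d)"
  by (simp add: PP_def)

lemma tail_sums: "(\<lambda>r. pp l (r + Suc d)) sums (1 - PP l d)"
proof -
  have "(\<lambda>i. pp l i) sums (1 - PP l d + (\<Sum>i<Suc d. pp l i))"
    using pp_sums by (simp add: PP_def lessThan_Suc_atMost)
  then show ?thesis by (subst sums_iff_shift)
qed

lemma stein_pointwise:
  "l * cc l d j - (if d = 0 then 0 else real d * cc l (d - 1) j) = (if d = j then 1 / pp l d else 0) - 1"
proof (cases d)
  case 0
  have "pp l 0 > 0" by (rule pp_pos)
  then show ?thesis using 0 l by (auto simp: cc_def PP_def field_simps)
next
  case (Suc d')
  have p1: "pp l d' > 0" "pp l d > 0" by (rule pp_pos)+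
  have rel: "l * pp l d' = real d * pp l d" using pp_Suc[of d'] Suc by (simp add: field_simps)
  define x where "x = (if j \<le> d' then 1 else 0) - PP l d'"
  have dpos: "real d > 0" using Suc by simp
  have e1: "real d * cc l (d - 1) j = x / pp l d"
  proof -
    have "real d * cc l (d - 1) j = real d * (x / (real d * pp l d))"
      using Suc rel by (simp add: cc_def x_def)
    also have "\<dots> = x / pp l d" using dpos by simp
    finally show ?thesis .
  qed
  have e2: "l * cc l d j = ((if j \<le> d then 1 else 0) - PP l d) / pp l d"
    using p1 l unfolding cc_def by simp
  have PPs: "PP l d = PP l d' + pp l d" using Suc PP_Suc by simp
  have "l * cc l d j - real d * cc l (d - 1) j = (((if j \<le> d then 1 else 0) - (if j \<le> d' then 1 else 0)) - pp l d) / pp l d"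
    unfolding e1 e2 x_def PPs using p1 by (simp add: diff_divide_distrib add_divide_distrib)
  also have "(if j \<le> d then 1 else 0) - (if j \<le> d' then 1 else 0) = (if d = j then 1 else (0::real))"
    using Suc by auto
  also have "((if d = j then 1 else 0) - pp l d) / pp l d = (if d = j then 1 / pp l d else 0) - 1"
    using p1 by (simp add: diff_divide_distrib)
  finally show ?thesis using Suc by simp
qed

lemma DD_alpha: "j \<le> d \<Longrightarrow> DD l d j \<le> 0"
proof -
  assume j: "j \<le> d"
  have p1: "pp l d > 0" "pp l (Suc d) > 0" by (rule pp_pos)+
  have key: "(1 - PP l (Suc d)) * pp l d \<le> (1 - PP l d) * pp l (Suc d)"
  proof (rule sums_le[OF _ sums_mult2[OF tail_sums] sums_mult2[OF tail_sums]])
    fix r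
    have A: "pp l (r + Suc (Suc d)) = pp l (r + Suc d) * l / real (r + Suc (Suc d))"
      using pp_Suc[of "r + Suc d"] by simp
    have B: "pp l (Suc d) = pp l d * l / real (Suc d)" by (rule pp_Suc)
    have C: "l / real (r + Suc (Suc d)) \<le> l / real (Suc d)"
      using l by (intro divide_left_mono) auto
    have D: "pp l (r + Suc d) * pp l d \<ge> 0" using pp_pos by (auto intro: less_imp_le)
    have e1: "pp l (r + Suc (Suc d)) * pp l d = (pp l (r + Suc d) * pp l d) * (l / real (r + Suc (Suc d)))"
      by (subst A) (simp add: mult_ac)
    have e2: "pp l (r + Suc d) * pp l (Suc d) = (pp l (r + Suc d) * pp l d) * (l / real (Suc d))"
      by (subst B) (simp add: mult_ac)
    show "pp l (r + Suc (Suc d)) * pp l d \<le> pp l (r + Suc d) * pp l (Suc d)"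
      unfolding e1 e2 by (rule mult_left_mono[OF C D])
  qed
  have "DD l d j = (1 - PP l (Suc d)) / (l * pp l (Suc d)) - (1 - PP l d) / (l * pp l d)"
    using j by (simp add: DD_def cc_def)
  also have "\<dots> \<le> 0"
    using key p1 l by (simp add: divide_simps mult_ac)
  finally show ?thesis .
qed

lemma PP_shift: "PP l (Suc d) = pp l 0 + (\<Sum>i\<le>d. pp l (Suc i))"
  unfolding PP_def by (rule sum.atMost_Suc_shift)

lemma DD_gamma: "j > Suc d \<Longrightarrow> DD l d j \<le> 0"
proof -
  assume j: "j > Suc d"
  have p1: "pp l d > 0" "pp l (Suc d) > 0" by (rule pp_pos)+
  have key: "PP l d * pp l (Suc d) \<le> PP l (Suc d) * pp l d"
  proof -
    have "PP l d * pp l (Suc d) = (\<Sum>i\<le>d. pp l i * pp l (Suc d))" by (simp add: PP_def sum_distrib_right)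
    also have "\<dots> \<le> (\<Sum>i\<le>d. pp l (Suc i) * pp l d)"
    proof (rule sum_mono)
      fix i assume "i \<in> {..d}"
      then have "l / real (Suc d) \<le> l / real (Suc i)" using l by (intro divide_left_mono) auto
      moreover have "pp l i * pp l d \<ge> 0" using pp_pos by (auto intro: less_imp_le)
      ultimately have "pp l i * pp l d * (l / real (Suc d)) \<le> pp l i * pp l d * (l / real (Suc i))"
        by (rule mult_left_mono)
      then show "pp l i * pp l (Suc d) \<le> pp l (Suc i) * pp l d"
        by (simp add: pp_Suc mult_ac)
    qed
    also have "\<dots> = (\<Sum>i\<le>d. pp l (Suc i)) * pp l d" by (simp add: sum_distrib_right)
    also have "\<dots> \<le> PP l (Suc d) * pp l d"
      using PP_shift[of d] pp_pos[of 0] p1 by (intro mult_right_mono) auto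
    finally show ?thesis .
  qed
  have "DD l d j = - PP l (Suc d) / (l * pp l (Suc d)) + PP l d / (l * pp l d)"
    using j by (simp add: DD_def cc_def)
  also have "\<dots> \<le> 0"
    using key p1 l by (simp add: divide_simps mult_ac)
  finally show ?thesis .
qed

lemma DD_beta: "0 \<le> pp l (Suc d) * DD l d (Suc d) \<and> pp l (Suc d) * DD l d (Suc d) \<le> 2 / l"
proof -
  have p1: "pp l d > 0" "pp l (Suc d) > 0" by (rule pp_pos)+
  have eq: "pp l (Suc d) * DD l d (Suc d) = (1 - PP l (Suc d)) / l + PP l d / real (Suc d)"
  proof -
    have "pp l (Suc d) * DD l d (Suc d) = pp l (Suc d) * ((1 - PP l (Suc d)) / (l * pp l (Suc d))) + pp l (Suc d) * (PP l d / (l * pp l d))"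
      by (simp add: DD_def cc_def algebra_simps diff_divide_distrib)
    also have "pp l (Suc d) * ((1 - PP l (Suc d)) / (l * pp l (Suc d))) = (1 - PP l (Suc d)) / l"
      using p1 by simp
    also have "pp l (Suc d) * (PP l d / (l * pp l d)) = PP l d / real (Suc d)"
      unfolding pp_Suc[of d] using p1 l by (simp add: field_simps)
    finally show ?thesis .
  qed
  have b1: "PP l d / real (Suc d) \<le> 1 / l"
  proof -
    have "l * PP l d = (\<Sum>i\<le>d. pp l (Suc i) * real (Suc i))"
      unfolding PP_def sum_distrib_left by (rule sum.cong) (use l in \<open>auto simp: pp_Suc\<close>)
    also have "\<dots> \<le> (\<Sum>i\<le>d. pp l (Suc i) * real (Suc d))"
      by (rule sum_mono) (use pp_pos in \<open>auto intro!: mult_left_mono less_imp_le\<close>)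
    also have "\<dots> = (\<Sum>i\<le>d. pp l (Suc i)) * real (Suc d)" by (simp add: sum_distrib_right)
    also have "\<dots> \<le> 1 * real (Suc d)"
      using PP_shift[of d] pp_pos[of 0] PP_le1[of "Suc d"] by (intro mult_right_mono) auto
    finally have "l * PP l d \<le> real (Suc d)" by simp
    then show ?thesis using l by (simp add: divide_simps mult_ac)
  qed
  have b2: "(1 - PP l (Suc d)) / l \<le> 1 / l" using PP_nonneg[of "Suc d"] l by (simp add: divide_right_mono)
  have "0 \<le> (1 - PP l (Suc d)) / l + PP l d / real (Suc d)"
    using PP_le1[of "Suc d"] PP_nonneg[of d] l by simp
  moreover have "(1 - PP l (Suc d)) / l + PP l d / real (Suc d) \<le> 2 / l" using b1 b2 by simp
  ultimately show ?thesis unfolding eq by simp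
qed

lemma pmf_poisson_pp: "pmf (poisson_pmf l) j = pp l j"
  using l by (simp add: pp_def)

lemma cc_bounded: "\<bar>cc l d j\<bar> \<le> 2 / (l * pp l d)"
proof -
  have p: "pp l d > 0" by (rule pp_pos)
  have "\<bar>(if j \<le> d then 1 else 0) - PP l d\<bar> \<le> 2" using PP_le1[of d] PP_nonneg[of d] by auto
  then show ?thesis using p l unfolding cc_def by (simp add: abs_divide divide_right_mono abs_mult)
qed

lemma integrable_cc: "integrable (measure_pmf (poisson_pmf l)) (cc l d)"
  by (rule measure_pmf.integrable_const_bound[where B = "2 / (l * pp l d)"]) (use cc_bounded in auto)

lemma integrable_DD: "integrable (measure_pmf (poisson_pmf l)) (DD l d)"
  unfolding DD_def[abs_def] by (intro Bochner_Integration.integrable_diff integrable_cc)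

lemma integrable_ind_DD: "integrable (measure_pmf (poisson_pmf l)) (\<lambda>j. indicator A j * DD l d j)"
  using integrable_real_mult_indicator[OF _ integrable_DD, of A d] by (simp add: mult.commute)

lemma integral_cc: "integral\<^sup>L (measure_pmf (poisson_pmf l)) (cc l d) = 0"
proof -
  let ?M = "measure_pmf (poisson_pmf l)"
  let ?c = "l * pp l d"
  have "integral\<^sup>L ?M (cc l d) = integral\<^sup>L ?M (\<lambda>j. indicator {..d} j / ?c - PP l d / ?c)"
    by (rule Bochner_Integration.integral_cong) (auto simp: cc_def diff_divide_distrib)
  also have "\<dots> = integral\<^sup>L ?M (\<lambda>j. indicator {..d} j / ?c) - integral\<^sup>L ?M (\<lambda>j. PP l d / ?c)"
    by (rule Bochner_Integration.integral_diff) (auto intro!: measure_pmf.integrable_const_bound[where B = "1 / \<bar>?c\<bar>"] split: split_indicator)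
  also have "integral\<^sup>L ?M (\<lambda>j. indicator {..d} j / ?c) = integral\<^sup>L ?M (indicator {..d}) / ?c"
    by (rule integral_divide_zero)
  also have "integral\<^sup>L ?M (indicator {..d} :: nat \<Rightarrow> real) = PP l d"
    by (simp add: measure_measure_pmf_finite pmf_poisson_pp PP_def)
  finally show ?thesis by simp
qed

lemma integral_DD: "integral\<^sup>L (measure_pmf (poisson_pmf l)) (DD l d) = 0"
  unfolding DD_def[abs_def]
  by (subst Bochner_Integration.integral_diff) (auto intro: integrable_cc simp: integral_cc)

lemma integral_point: "integral\<^sup>L (measure_pmf (poisson_pmf l)) (\<lambda>j. indicator {a} j * f j) = f a * pp l a"
proof -
  have "integral\<^sup>L (measure_pmf (poisson_pmf l)) (\<lambda>j. indicator {a} j * f j) =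
      (\<Sum>j\<in>{a}. indicator {a} j * f j * pmf (poisson_pmf l) j)"
    by (rule integral_measure_pmf_real) (auto split: split_indicator_asm)
  then show ?thesis by (simp add: pmf_poisson_pp)
qed

lemma ind_DD_bound: "\<bar>integral\<^sup>L (measure_pmf (poisson_pmf l)) (\<lambda>j. indicator A j * DD l d j)\<bar> \<le> 2 / l"
proof -
  let ?M = "measure_pmf (poisson_pmf l)"
  have up: "integral\<^sup>L ?M (\<lambda>j. indicator A j * DD l d j) \<le> integral\<^sup>L ?M (\<lambda>j. indicator {Suc d} j * DD l d j)"
  proof (rule integral_mono[OF integrable_ind_DD integrable_ind_DD])
    fix j
    show "indicator A j * DD l d j \<le> indicator {Suc d} j * DD l d j"
    proof (cases "j = Suc d")
      case True
      then have "DD l d j \<ge> 0" using DD_beta[of d] pp_pos[of "Suc d"] by (simp add: zero_le_mult_iff)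
      then show ?thesis using True by (auto simp: indicator_def)
    next
      case False
      then have "DD l d j \<le> 0" using DD_alpha[of j d] DD_gamma[of d j] by (cases "j \<le> d") auto
      then show ?thesis using False by (auto simp: indicator_def)
    qed
  qed
  have lo: "integral\<^sup>L ?M (\<lambda>j. DD l d j - indicator {Suc d} j * DD l d j) \<le> integral\<^sup>L ?M (\<lambda>j. indicator A j * DD l d j)"
  proof (rule integral_mono[OF _ integrable_ind_DD])
    show "integrable ?M (\<lambda>j. DD l d j - indicator {Suc d} j * DD l d j)"
      by (intro Bochner_Integration.integrable_diff integrable_DD integrable_ind_DD)
    fix j
    show "DD l d j - indicator {Suc d} j * DD l d j \<le> indicator A j * DD l d j"
    proof (cases "j = Suc d")
      case True
      then have "DD l d j \<ge> 0" using DD_beta[of d] pp_pos[of "Suc d"] by (simp add: zero_le_mult_iff)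
      then show ?thesis using True by (auto simp: indicator_def)
    next
      case False
      then have "DD l d j \<le> 0" using DD_alpha[of j d] DD_gamma[of d j] by (cases "j \<le> d") auto
      then show ?thesis using False by (auto simp: indicator_def)
    qed
  qed
  have i2: "integral\<^sup>L ?M (\<lambda>j. DD l d j - indicator {Suc d} j * DD l d j) = 0 - DD l d (Suc d) * pp l (Suc d)"
    by (subst Bochner_Integration.integral_diff) (auto intro: integrable_DD integrable_ind_DD simp: integral_DD integral_point)
  have i1: "integral\<^sup>L ?M (\<lambda>j. indicator {Suc d} j * DD l d j) = DD l d (Suc d) * pp l (Suc d)"
    by (rule integral_point)
  have B: "DD l d (Suc d) * pp l (Suc d) \<le> 2 / l" using DD_beta[of d] by (simp add: mult.commute)
  have u2: "integral\<^sup>L ?M (\<lambda>j. indicator A j * DD l d j) \<le> DD l d (Suc d) * pp l (Suc d)"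
    using up unfolding i1 .
  have l2: "- (DD l d (Suc d) * pp l (Suc d)) \<le> integral\<^sup>L ?M (\<lambda>j. indicator A j * DD l d j)"
    using lo unfolding i2 by simp
  show ?thesis unfolding abs_le_iff using u2 l2 B by linarith
qed

end


lemma main_pointwise:
  assumes t: "\<theta> > 0"
  shows "q \<theta> k j / pp (1 + hsum \<theta> k) j - 1 = (\<Sum>d\<le>Suc k. uu \<theta> k d * DD (1 + hsum \<theta> k) d j)"
proof -
  let ?l = "1 + hsum \<theta> k"
  have l: "?l > 0" using t by (simp add: hsum_def sum_nonneg add_pos_nonneg)
  have "(\<Sum>d\<le>Suc k. q \<theta> k d * (?l * cc ?l d j - (if d = 0 then 0 else real d * cc ?l (d - 1) j)))
       = (\<Sum>d\<le>Suc k. uu \<theta> k d * (cc ?l (Suc d) j - cc ?l d j))"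
    by (rule stein_sum[OF t])
  also have "\<dots> = (\<Sum>d\<le>Suc k. uu \<theta> k d * DD ?l d j)" by (simp add: DD_def)
  finally have eq: "(\<Sum>d\<le>Suc k. q \<theta> k d * ((if d = j then 1 / pp ?l d else 0) - 1)) = (\<Sum>d\<le>Suc k. uu \<theta> k d * DD ?l d j)"
    by (simp only: stein_pointwise[OF l])
  have "(\<Sum>d\<le>Suc k. q \<theta> k d * ((if d = j then 1 / pp ?l d else 0) - 1))
      = (\<Sum>d\<le>Suc k. (if d = j then q \<theta> k d / pp ?l d else 0)) - (\<Sum>d\<le>Suc k. q \<theta> k d)"
  proof -
    have "(\<Sum>d\<le>Suc k. q \<theta> k d * ((if d = j then 1 / pp ?l d else 0) - 1))
        = (\<Sum>d\<le>Suc k. (if d = j then q \<theta> k d / pp ?l d else 0) - q \<theta> k d)"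
      by (rule sum.cong) (auto simp: right_diff_distrib)
    then show ?thesis by (simp only: sum_subtractf)
  qed
  also have "(\<Sum>d\<le>Suc k. (if d = j then q \<theta> k d / pp ?l d else 0)) = q \<theta> k j / pp ?l j"
    using q_supp[OF t, of j k] by (simp add: sum.delta' del: sum.atMost_Suc)
  also have "(\<Sum>d\<le>Suc k. q \<theta> k d) = 1" by (rule sum_q[OF t]) simp
  finally show ?thesis using eq by simp
qed

lemma bnd_integrable: "(\<And>x. \<bar>f x\<bar> \<le> B) \<Longrightarrow> integrable (measure_pmf M) (f :: _ \<Rightarrow> real)"
  by (rule measure_pmf.integrable_const_bound[where B = B]) auto

lemma prob_diff:
  fixes k :: nat
  assumes t: "\<theta> > 0"
  defines "l \<equiv> 1 + hsum \<theta> k"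
  shows "measure_pmf.prob (depth_law \<theta> (Suc (Suc k))) A - measure_pmf.prob (poisson_pmf l) A
       = (\<Sum>d\<le>Suc k. uu \<theta> k d * integral\<^sup>L (measure_pmf (poisson_pmf l)) (\<lambda>j. indicator A j * DD l d j))"
proof -
  have l: "l > 0" using t by (simp add: l_def hsum_def sum_nonneg add_pos_nonneg)
  let ?M = "measure_pmf (poisson_pmf l)"
  let ?D = "depth_law \<theta> (Suc (Suc k))"
  have pD: "measure_pmf.prob ?D A = (\<Sum>j\<le>Suc k. indicator A j * q \<theta> k j)"
  proof -
    have "measure_pmf.prob ?D A = integral\<^sup>L (measure_pmf ?D) (indicator A)" by simp
    also have "\<dots> = (\<Sum>j\<le>Suc k. indicator A j * pmf ?D j)"
    proof (rule integral_measure_pmf_real)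
      fix a assume "a \<in> set_pmf ?D" "indicat_real A a \<noteq> 0"
      then have "q \<theta> k a \<noteq> 0" by (simp add: q_def set_pmf_iff)
      then show "a \<in> {..Suc k}" using q_supp[OF t, of a k] by (meson atMost_iff not_le)
    qed simp
    finally show ?thesis by (simp add: q_def)
  qed
  have pD2: "integral\<^sup>L ?M (\<lambda>j. indicator A j * (q \<theta> k j / pp l j)) = (\<Sum>j\<le>Suc k. indicator A j * q \<theta> k j)"
  proof -
    have "integral\<^sup>L ?M (\<lambda>j. indicator A j * (q \<theta> k j / pp l j)) = (\<Sum>j\<le>Suc k. indicator A j * (q \<theta> k j / pp l j) * pmf (poisson_pmf l) j)"
    proof (rule integral_measure_pmf_real)
      fix a assume "indicat_real A a * (q \<theta> k a / pp l a) \<noteq> 0"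
      then have "q \<theta> k a \<noteq> 0" by auto
      then show "a \<in> {..Suc k}" using q_supp[OF t, of a k] by (meson atMost_iff not_le)
    qed simp
    also have "\<dots> = (\<Sum>j\<le>Suc k. indicator A j * q \<theta> k j)"
    proof (rule sum.cong[OF refl])
      fix j
      have "pp l j > 0" by (rule pp_pos[OF l])
      then show "indicator A j * (q \<theta> k j / pp l j) * pmf (poisson_pmf l) j = indicator A j * q \<theta> k j"
        by (simp add: pmf_poisson_pp[OF l])
    qed
    finally show ?thesis .
  qed
  have pt: "\<And>j. indicator A j * (q \<theta> k j / pp l j) = indicator A j + (\<Sum>d\<le>Suc k. uu \<theta> k d * (indicator A j * DD l d j))"
    using main_pointwise[OF t, of k] unfolding l_def[symmetric]
    by (simp add: sum_distrib_left[symmetric] mult_ac algebra_simps del: sum.atMost_Suc)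
  have "integral\<^sup>L ?M (\<lambda>j. indicator A j * (q \<theta> k j / pp l j))
      = integral\<^sup>L ?M (indicator A) + integral\<^sup>L ?M (\<lambda>j. \<Sum>d\<le>Suc k. uu \<theta> k d * (indicator A j * DD l d j))"
  proof -
    have i1: "integrable ?M (indicator A :: nat \<Rightarrow> real)"
      by (rule bnd_integrable[where B = 1]) (auto split: split_indicator)
    have i2: "integrable ?M (\<lambda>j. \<Sum>d\<le>Suc k. uu \<theta> k d * (indicator A j * DD l d j))"
      by (intro Bochner_Integration.integrable_sum integrable_mult_right integrable_ind_DD[OF l])
    show ?thesis unfolding pt by (rule Bochner_Integration.integral_add[OF i1 i2])
  qed
  also have "integral\<^sup>L ?M (\<lambda>j. \<Sum>d\<le>Suc k. uu \<theta> k d * (indicator A j * DD l d j))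
      = (\<Sum>d\<le>Suc k. uu \<theta> k d * integral\<^sup>L ?M (\<lambda>j. indicator A j * DD l d j))"
    by (subst Bochner_Integration.integral_sum) (auto intro!: integrable_ind_DD[OF l] simp del: sum.atMost_Suc)
  finally show ?thesis using pD pD2 by simp
qed

lemma prob_diff_bound:
  assumes t: "\<theta> > 0"
  shows "\<bar>measure_pmf.prob (depth_law \<theta> (Suc (Suc k))) A - measure_pmf.prob (poisson_pmf (1 + hsum \<theta> k)) A\<bar>
       \<le> 2 * (1 + hsum2 \<theta> k) / (1 + hsum \<theta> k)"
proof -
  let ?l = "1 + hsum \<theta> k"
  have l: "?l > 0" using t by (simp add: hsum_def sum_nonneg add_pos_nonneg)
  have "\<bar>measure_pmf.prob (depth_law \<theta> (Suc (Suc k))) A - measure_pmf.prob (poisson_pmf ?l) A\<bar>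
      = \<bar>\<Sum>d\<le>Suc k. uu \<theta> k d * integral\<^sup>L (measure_pmf (poisson_pmf ?l)) (\<lambda>j. indicator A j * DD ?l d j)\<bar>"
    using prob_diff[OF t, of k A] by simp
  also have "\<dots> \<le> (\<Sum>d\<le>Suc k. \<bar>uu \<theta> k d * integral\<^sup>L (measure_pmf (poisson_pmf ?l)) (\<lambda>j. indicator A j * DD ?l d j)\<bar>)"
    by (rule sum_abs)
  also have "\<dots> \<le> (\<Sum>d\<le>Suc k. uu \<theta> k d * (2 / ?l))"
  proof (rule sum_mono)
    fix d
    have "\<bar>uu \<theta> k d * integral\<^sup>L (measure_pmf (poisson_pmf ?l)) (\<lambda>j. indicator A j * DD ?l d j)\<bar>
        = uu \<theta> k d * \<bar>integral\<^sup>L (measure_pmf (poisson_pmf ?l)) (\<lambda>j. indicator A j * DD ?l d j)\<bar>"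
      using uu_nonneg[OF t, of k d] by (simp add: abs_mult)
    also have "\<dots> \<le> uu \<theta> k d * (2 / ?l)"
      by (rule mult_left_mono[OF ind_DD_bound[OF l] uu_nonneg[OF t]])
    finally show "\<bar>uu \<theta> k d * integral\<^sup>L (measure_pmf (poisson_pmf ?l)) (\<lambda>j. indicator A j * DD ?l d j)\<bar> \<le> uu \<theta> k d * (2 / ?l)" .
  qed
  also have "\<dots> = (\<Sum>d\<le>Suc k. uu \<theta> k d) * (2 / ?l)" by (simp only: sum_distrib_right)
  also have "\<dots> = 2 * (1 + hsum2 \<theta> k) / ?l" using sum_uu[OF t, of k "Suc k"] by simp
  finally show ?thesis .
qed

lemma dTV_bound:
  assumes t: "\<theta> > 0"
  shows "dTV (depth_law \<theta> (Suc (Suc k))) (poisson_pmf (1 + hsum \<theta> k)) \<le> 2 * (1 + hsum2 \<theta> k) / (1 + hsum \<theta> k)"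
    and "dTV (depth_law \<theta> (Suc (Suc k))) (poisson_pmf (1 + hsum \<theta> k)) \<ge> 0"
proof -
  show "dTV (depth_law \<theta> (Suc (Suc k))) (poisson_pmf (1 + hsum \<theta> k)) \<le> 2 * (1 + hsum2 \<theta> k) / (1 + hsum \<theta> k)"
    unfolding dTV_def by (rule cSUP_least, simp, rule prob_diff_bound[OF t])
  show "dTV (depth_law \<theta> (Suc (Suc k))) (poisson_pmf (1 + hsum \<theta> k)) \<ge> 0"
    unfolding dTV_def
    by (rule cSUP_upper2[where x = "{}"]) (auto intro!: bdd_aboveI2 prob_diff_bound[OF t])
qed

lemma hsum2_le: "\<theta> > 0 \<Longrightarrow> hsum2 \<theta> k \<le> Polygamma 1 (\<theta> + 1)"
  by (rule incseq_le[OF _ hsum2_lim]) (auto intro!: incseq_SucI simp: hsum2_Suc)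

lemma TV_bigO:
  assumes t: "\<theta> > 0"
  shows "(\<lambda>n. dTV (depth_law \<theta> n) (poisson_pmf (measure_pmf.expectation (depth_law \<theta> n) real))) \<in> O(\<lambda>n. 1 / ln (real n))"
proof (rule bigoI)
  define Pg where "Pg = Polygamma 1 (\<theta> + 1)"
  define Dg where "Dg = Digamma (\<theta> + 1)"
  have ev1: "eventually (\<lambda>n. \<bar>measure_pmf.expectation (depth_law \<theta> n) real - (ln (real n) - Dg + 1)\<bar> < 1) sequentially"
    using order_tendstoD(2)[OF tendsto_rabs_zero[OF E_lim[OF t]], of 1] unfolding Dg_def by simp
  have ev2: "eventually (\<lambda>n. ln (real n) \<ge> 2 * (\<bar>Dg\<bar> + 1)) sequentially"
    using filterlim_compose[OF ln_at_top filterlim_real_sequentially]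
    by (simp add: filterlim_at_top)
  show "eventually (\<lambda>n. norm (dTV (depth_law \<theta> n) (poisson_pmf (measure_pmf.expectation (depth_law \<theta> n) real)))
       \<le> (4 * (1 + Pg)) * norm (1 / ln (real n))) sequentially"
    using ev1 ev2 eventually_ge_at_top[of 2]
  proof eventually_elim
    case (elim n)
    define k where "k = n - 2"
    have n: "n = Suc (Suc k)" using elim(3) by (simp add: k_def)
    define E where "E = 1 + hsum \<theta> k"
    have Ef: "measure_pmf.expectation (depth_law \<theta> n) real = E" unfolding n E_def by (rule E_formula[OF t])
    have e2: "ln (real n) \<ge> 2 * \<bar>Dg\<bar> + 2" using elim(2) by (simp add: algebra_simps)
    have a0: "\<bar>Dg\<bar> \<ge> 0" "Dg \<le> \<bar>Dg\<bar>" by simp_all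
    have lnpos: "ln (real n) > 0" using e2 a0 by linarith
    have e1: "E - (ln (real n) - Dg + 1) > -1" using elim(1) unfolding Ef by (simp add: abs_less_iff)
    have EL: "E \<ge> ln (real n) / 2" using e1 e2 a0 by linarith
    have Epos: "E > 0" using EL lnpos by linarith
    have h2: "1 + hsum2 \<theta> k \<le> 1 + Pg" using hsum2_le[OF t, of k] by (simp add: Pg_def)
    have h2p: "0 \<le> 1 + hsum2 \<theta> k" by (simp add: hsum2_def sum_nonneg)
    have "norm (dTV (depth_law \<theta> n) (poisson_pmf E)) = dTV (depth_law \<theta> n) (poisson_pmf E)"
      using dTV_bound(2)[OF t, of k] unfolding n E_def by simp
    also have "\<dots> \<le> 2 * (1 + hsum2 \<theta> k) / E" using dTV_bound(1)[OF t, of k] unfolding n E_def by simp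
    also have "\<dots> \<le> 2 * (1 + Pg) / (ln (real n) / 2)"
    proof (rule divide_mono)
      show "2 * (1 + hsum2 \<theta> k) \<le> 2 * (1 + Pg)" using h2 by simp
      show "ln (real n) / 2 \<le> E" by (rule EL)
      show "0 < ln (real n) / 2" using lnpos by simp
      show "0 \<le> 2 * (1 + hsum2 \<theta> k)" using h2p by simp
    qed
    also have "\<dots> = (4 * (1 + Pg)) * norm (1 / ln (real n))" using lnpos by simp
    finally show ?case unfolding Ef .
  qed
qed


theorem corollary2p2:
  fixes \<theta> :: real
  assumes "\<theta> > 0"
  defines "E \<equiv> \<lambda>n. measure_pmf.expectation (depth_law \<theta> n) real"
      and "V \<equiv> \<lambda>n. measure_pmf.variance (depth_law \<theta> n) real"
  shows "(\<forall>n\<ge>2. E n = 1 + (\<Sum>i=1..n-2. 1 / (\<theta> + real i)))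
    \<and> ((\<lambda>n. E n - (ln (real n) - Digamma (\<theta> + 1) + 1)) \<longlonglongrightarrow> 0)
    \<and> (\<forall>n\<ge>2. V n = (\<Sum>i=1..n-2. 1 / (\<theta> + real i)) - (\<Sum>i=1..n-2. (1 / (\<theta> + real i))^2))
    \<and> ((\<lambda>n. V n - (ln (real n) - Digamma (\<theta> + 1) - Polygamma 1 (\<theta> + 1))) \<longlonglongrightarrow> 0)
    \<and> weak_conv_m (\<lambda>n. distr (measure_pmf (depth_law \<theta> n)) borel
            (\<lambda>d. (real d - E n) / sqrt (V n))) std_normal_distribution
    \<and> (\<lambda>n. dTV (depth_law \<theta> n) (poisson_pmf (E n))) \<in> O(\<lambda>n. 1 / ln (real n))"
proof (intro conjI)
  show "\<forall>n\<ge>2. E n = 1 + (\<Sum>i=1..n-2. 1 / (\<theta> + real i))"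
  proof (intro allI impI)
    fix n :: nat assume n: "n \<ge> 2"
    then have nn: "n = Suc (Suc (n - 2))" by simp
    show "E n = 1 + (\<Sum>i=1..n-2. 1 / (\<theta> + real i))"
      unfolding E_def using E_formula[OF assms(1), of "n - 2"] nn by (metis hsum_def)
  qed
  show "(\<lambda>n. E n - (ln (real n) - Digamma (\<theta> + 1) + 1)) \<longlonglongrightarrow> 0"
    unfolding E_def by (rule E_lim[OF assms(1)])
  show "\<forall>n\<ge>2. V n = (\<Sum>i=1..n-2. 1 / (\<theta> + real i)) - (\<Sum>i=1..n-2. (1 / (\<theta> + real i))^2)"
  proof (intro allI impI)
    fix n :: nat assume n: "n \<ge> 2"
    then have nn: "n = Suc (Suc (n - 2))" by simp
    show "V n = (\<Sum>i=1..n-2. 1 / (\<theta> + real i)) - (\<Sum>i=1..n-2. (1 / (\<theta> + real i))^2)"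
      unfolding V_def using V_formula[OF assms(1), of "n - 2"] nn by (metis hsum_def hsum2_def)
  qed
  show "(\<lambda>n. V n - (ln (real n) - Digamma (\<theta> + 1) - Polygamma 1 (\<theta> + 1))) \<longlonglongrightarrow> 0"
    unfolding V_def by (rule V_lim[OF assms(1)])
  show "weak_conv_m (\<lambda>n. distr (measure_pmf (depth_law \<theta> n)) borel
            (\<lambda>d. (real d - E n) / sqrt (V n))) std_normal_distribution"
    unfolding E_def V_def by (rule CLT_depth[OF assms(1)])
  show "(\<lambda>n. dTV (depth_law \<theta> n) (poisson_pmf (E n))) \<in> O(\<lambda>n. 1 / ln (real n))"
    unfolding E_def by (rule TV_bigO[OF assms(1)])
qed


end
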